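(* Let $G$ be an undirected graph, $(V(G),\mathcal C)$ its corresponding connectoid, and $U\subseteq V(G)$. The following are equivalent: (a) there is a normal tree in $G$ containing $U$; (b) there is a normal tree of $(V(G),\mathcal C)$ containing $U$; (c) there is a weak normal tree of $(V(G),\mathcal C)$ containing $U$.
   Context: A connectoid is given by a set $S$ and a set $\mathcal F$ of finite subsets of $S$ such that (i) $F\cup F'\in\mathcal F$ whenever $F,F'\in\mathcal F$ and $F\cap F'\neq\emptyset$, and (ii) $\emptyset\in\mathcal F$ and $\{s\}\in\mathcal F$ for every $s\in S$. A set $C\subseteq S$ is connected if for all $x,y\in C$ there is $F\in\mathcal F$ with $F\subseteq C$ and $x,y\in F$; $\mathcal C$ is the set of connected sets. The corresponding connectoid of $G$ has $S=V(G)$ and $\mathcal F$ the vertex sets of finite connected subgraphs of $G$, so its connected sets are the vertex sets of connected subgraphs of $G$. For $S'\subseteq S$, $\mathcal K(S')$ denotes the set of maximal connected subsets of $S'$. A necklace is a connected set $N$ for which there is a family $(H_n)_{n\in\mathbb N}$ of finite connected sets with $N=\bigcup_n H_n$ and $H_i\cap H_j\neq\emptyset$ iff $|i-j|\le 1$. For a rooted tree $T$ with tree order $\le_T$ and $t\in V(T)$, let $\mathrm{Down}^\circ_T(t)=\{x\in V(T):x<_T t\}$. A weak normal tree of $(S,\mathcal C)$ is a rooted undirected tree $T$ with $V(T)\subseteq S$ (not required to be a subgraph of anything) such that (1) for every $C\in\mathcal C$ and every two $\le_T$-incomparable $u,v\in C\cap V(T)$ there is $w\in C$ with $w\le_T u$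 and $w\le_T v$, and (2) for all $u\le_T v$ in $V(T)$ there is $C\in\mathcal C$ containing $u,v$ with $C\cap\mathrm{Down}^\circ_T(u)=\emptyset$. It is a normal tree if moreover for every rooted ray $R$ of $T$ some necklace contains all but finitely many vertices of $R$. A tree "contains $U$" if $U\subseteq V(T)$. A normal tree in the graph $G$ is a rooted tree $T\subseteq G$ (a subgraph) such that the end vertices of every path in $G$ with only its end vertices in $T$ are $\le_T$-comparable (equivalently, every two vertices of $T$ adjacent in $G$ and, more generally, joined by a $T$-path in $G$, are comparable). *)

theory Defs
  imports Main
begin

text \<open>Graphs are given by a vertex set V and a symmetric edge relation E \<subseteq> V \<times> V
 (possibly infinite). Paths are lists of distinct vertices, consecutive ones adjacent.\<close>

definition is_path :: "('a \<times> 'a) set \<Rightarrow> 'a list \<Rightarrow> bool" where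
  "is_path E xs \<longleftrightarrow> xs \<noteq> [] \<and> distinct xs \<and> (\<forall>i. Suc i < length xs \<longrightarrow> (xs ! i, xs ! Suc i) \<in> E)"

definition gconnected :: "('a \<times> 'a) set \<Rightarrow> 'a set \<Rightarrow> bool" where
  "gconnected E X \<longleftrightarrow> (\<forall>x\<in>X. \<forall>y\<in>X. (x, y) \<in> (E \<inter> (X \<times> X))\<^sup>*)"

definition connectoid :: "'a set \<Rightarrow> 'a set set \<Rightarrow> bool" where
  "connectoid S F \<longleftrightarrow> (\<forall>X\<in>F. finite X \<and> X \<subseteq> S)
     \<and> (\<forall>X\<in>F. \<forall>Y\<in>F. X \<inter> Y \<noteq> {} \<longrightarrow> X \<union> Y \<in> F)
     \<and> {} \<in> F \<and> (\<forall>s\<in>S. {s} \<in> F)"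

definition conn_sets :: "'a set \<Rightarrow> 'a set set \<Rightarrow> 'a set set" where
  "conn_sets S F = {C. C \<subseteq> S \<and> (\<forall>x\<in>C. \<forall>y\<in>C. \<exists>X\<in>F. X \<subseteq> C \<and> x \<in> X \<and> y \<in> X)}"

definition graph_F :: "'a set \<Rightarrow> ('a \<times> 'a) set \<Rightarrow> 'a set set" where
  "graph_F V E = {X. finite X \<and> X \<subseteq> V \<and> gconnected E X}"

definition graph_C :: "'a set \<Rightarrow> ('a \<times> 'a) set \<Rightarrow> 'a set set" where
  "graph_C V E = conn_sets V (graph_F V E)"

definition is_tree :: "'a set \<Rightarrow> ('a \<times> 'a) set \<Rightarrow> bool" where
  "is_tree VT ET \<longleftrightarrow> ET \<subseteq> VT \<times> VT \<and> sym ET \<and> irrefl ET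
     \<and> (\<forall>x\<in>VT. \<forall>y\<in>VT. (x, y) \<in> ET\<^sup>*)
     \<and> \<not> (\<exists>xs. length xs \<ge> 3 \<and> is_path ET xs \<and> (last xs, hd xs) \<in> ET)"

definition rooted_tree :: "'a set \<Rightarrow> ('a \<times> 'a) set \<Rightarrow> 'a \<Rightarrow> bool" where
  "rooted_tree VT ET r \<longleftrightarrow> is_tree VT ET \<and> r \<in> VT"

definition tree_le :: "('a \<times> 'a) set \<Rightarrow> 'a \<Rightarrow> 'a \<Rightarrow> 'a \<Rightarrow> bool" where
  "tree_le ET r x y \<longleftrightarrow> (\<exists>p. is_path ET p \<and> hd p = r \<and> last p = y \<and> x \<in> set p)"

definition down_open :: "('a \<times> 'a) set \<Rightarrow> 'a \<Rightarrow> 'a \<Rightarrow> 'a set" where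
  "down_open ET r t = {x. tree_le ET r x t \<and> x \<noteq> t}"

definition comparable_T :: "('a \<times> 'a) set \<Rightarrow> 'a \<Rightarrow> 'a \<Rightarrow> 'a \<Rightarrow> bool" where
  "comparable_T ET r u v \<longleftrightarrow> tree_le ET r u v \<or> tree_le ET r v u"

definition necklace :: "'a set set \<Rightarrow> 'a set \<Rightarrow> bool" where
  "necklace \<C> N \<longleftrightarrow> N \<in> \<C> \<and> (\<exists>H :: nat \<Rightarrow> 'a set.
     (\<forall>n. finite (H n) \<and> H n \<in> \<C>) \<and> N = (\<Union>n. H n)
     \<and> (\<forall>i j. H i \<inter> H j \<noteq> {} \<longleftrightarrow> (i \<le> j + 1 \<and> j \<le> i + 1)))"

definition weak_normal_tree :: "'a set \<Rightarrow> 'a set set \<Rightarrow> 'a set \<Rightarrow> ('a \<times> 'a) set \<Rightarrow> 'a \<Rightarrow> bool" where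
  "weak_normal_tree S \<C> VT ET r \<longleftrightarrow> rooted_tree VT ET r \<and> VT \<subseteq> S
     \<and> (\<forall>C\<in>\<C>. \<forall>u\<in>C \<inter> VT. \<forall>v\<in>C \<inter> VT. \<not> comparable_T ET r u v \<longrightarrow>
           (\<exists>w\<in>C. tree_le ET r w u \<and> tree_le ET r w v))
     \<and> (\<forall>u\<in>VT. \<forall>v\<in>VT. tree_le ET r u v \<longrightarrow>
           (\<exists>C\<in>\<C>. u \<in> C \<and> v \<in> C \<and> C \<inter> down_open ET r u = {}))"

definition rooted_ray :: "('a \<times> 'a) set \<Rightarrow> 'a \<Rightarrow> (nat \<Rightarrow> 'a) \<Rightarrow> bool" where
  "rooted_ray ET r f \<longleftrightarrow> inj f \<and> f 0 = r \<and> (\<forall>n. (f n, f (Suc n)) \<in> ET)"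

definition normal_tree_cn :: "'a set \<Rightarrow> 'a set set \<Rightarrow> 'a set \<Rightarrow> ('a \<times> 'a) set \<Rightarrow> 'a \<Rightarrow> bool" where
  "normal_tree_cn S \<C> VT ET r \<longleftrightarrow> weak_normal_tree S \<C> VT ET r
     \<and> (\<forall>f. rooted_ray ET r f \<longrightarrow> (\<exists>N. necklace \<C> N \<and> finite (range f - N)))"

definition normal_tree_graph :: "'a set \<Rightarrow> ('a \<times> 'a) set \<Rightarrow> 'a set \<Rightarrow> ('a \<times> 'a) set \<Rightarrow> 'a \<Rightarrow> bool" where
  "normal_tree_graph V E VT ET r \<longleftrightarrow> rooted_tree VT ET r \<and> VT \<subseteq> V \<and> ET \<subseteq> E
     \<and> (\<forall>p. is_path E p \<and> length p \<ge> 2 \<and> hd p \<in> VT \<and> last p \<in> VT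
            \<and> (\<forall>i. 0 < i \<and> i < length p - 1 \<longrightarrow> p ! i \<notin> VT)
            \<longrightarrow> comparable_T ET r (hd p) (last p))"

end

theory Submission
  imports Defs
begin

lemma is_path_single[simp]: "is_path E [x]"
  by (simp add: is_path_def)

lemma is_path_take: "is_path E p \<Longrightarrow> 0 < k \<Longrightarrow> is_path E (take k p)"
  unfolding is_path_def by auto

lemma is_path_drop: "is_path E p \<Longrightarrow> k < length p \<Longrightarrow> is_path E (drop k p)"
  unfolding is_path_def by (auto simp: add.commute add_Suc_right)

lemma is_path_cons: "is_path E p \<Longrightarrow> x \<notin> set p \<Longrightarrow> (x, hd p) \<in> E \<Longrightarrow> is_path E (x # p)"
  unfolding is_path_def
  apply (auto simp: nth_Cons split: nat.splits)
  by (metis hd_conv_nth length_greater_0_conv)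

lemma is_path_ConsD: "is_path E (x # p) \<Longrightarrow> p \<noteq> [] \<Longrightarrow> is_path E p \<and> x \<notin> set p \<and> (x, hd p) \<in> E"
proof -
  assume a: "is_path E (x # p)" and ne: "p \<noteq> []"
  have 1: "\<And>i. Suc i < length p \<Longrightarrow> (p ! i, p ! Suc i) \<in> E"
  proof -
    fix i assume "Suc i < length p"
    moreover have "\<forall>i. Suc i < length (x#p) \<longrightarrow> ((x#p)!i, (x#p)!Suc i) \<in> E" using a unfolding is_path_def by blast
    ultimately show "(p ! i, p ! Suc i) \<in> E" using spec[of _ "Suc i"] by fastforce
  qed
  have "\<forall>i. Suc i < length (x#p) \<longrightarrow> ((x#p)!i, (x#p)!Suc i) \<in> E" using a unfolding is_path_def by blast
  then have "((x#p) ! 0, (x#p) ! Suc 0) \<in> E" using ne spec[of _ 0] by fastforce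
  then have "(x, hd p) \<in> E" using ne by (simp add: hd_conv_nth)
  then show ?thesis using a ne 1 unfolding is_path_def by auto
qed

lemma is_path_rev: "sym E \<Longrightarrow> is_path E p \<Longrightarrow> is_path E (rev p)"
  unfolding is_path_def
proof (intro conjI allI impI; (elim conjE)?)
  fix i assume s: "sym E" and ne: "p \<noteq> []" and d: "distinct p"
    and e: "\<forall>i. Suc i < length p \<longrightarrow> (p ! i, p ! Suc i) \<in> E" and i: "Suc i < length (rev p)"
  have "(p ! (length p - Suc (Suc i)), p ! Suc (length p - Suc (Suc i))) \<in> E"
    using e i by auto
  moreover have "Suc (length p - Suc (Suc i)) = length p - Suc i" using i by auto
  ultimately have "(p ! (length p - Suc (Suc i)), p ! (length p - Suc i)) \<in> E" by simp
  then show "(rev p ! i, rev p ! Suc i) \<in> E" using i s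
    by (auto simp: rev_nth dest: symD)
qed auto

lemma hd_rev': "p \<noteq> [] \<Longrightarrow> hd (rev p) = last p" by (simp add: hd_rev)

lemma path_rtrancl_nth:
  assumes "is_path E p" "i \<le> j" "j < length p" "set p \<subseteq> X"
  shows "(p ! i, p ! j) \<in> (E \<inter> X \<times> X)\<^sup>*"
  using assms(2,3)
proof (induction j)
  case 0 then show ?case by simp
next
  case (Suc j)
  show ?case
  proof (cases "i = Suc j")
    case True then show ?thesis by simp
  next
    case False
    then have "(p ! i, p ! j) \<in> (E \<inter> X \<times> X)\<^sup>*" using Suc by auto
    moreover have "(p ! j, p ! Suc j) \<in> E \<inter> X \<times> X"
      using assms(1,4) Suc.prems unfolding is_path_def by (auto simp: subset_iff)
    ultimately show ?thesis by (rule rtrancl_into_rtrancl)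
  qed
qed

lemma path_rtrancl:
  assumes "is_path E p" "set p \<subseteq> X"
  shows "(hd p, last p) \<in> (E \<inter> X \<times> X)\<^sup>*"
proof -
  have ne: "p \<noteq> []" using assms unfolding is_path_def by auto
  have "(p ! 0, p ! (length p - 1)) \<in> (E \<inter> X \<times> X)\<^sup>*"
    using path_rtrancl_nth[OF assms(1) _ _ assms(2)] ne by auto
  then show ?thesis using ne by (simp add: hd_conv_nth last_conv_nth)
qed

lemma rtrancl_path:
  assumes "(x, y) \<in> (E \<inter> X \<times> X)\<^sup>*" "x \<in> X"
  shows "\<exists>p. is_path E p \<and> hd p = x \<and> last p = y \<and> set p \<subseteq> X"
  using assms
proof (induction rule: converse_rtrancl_induct)
  case base
  then show ?case by (intro exI[of _ "[y]"]) auto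
next
  case (step x z)
  then have "z \<in> X" by auto
  from step.IH[OF this] obtain q where q: "is_path E q" "hd q = z" "last q = y" "set q \<subseteq> X" by auto
  have qne: "q \<noteq> []" using q unfolding is_path_def by auto
  show ?case
  proof (cases "x \<in> set q")
    case True
    then obtain k where k: "k < length q" "q ! k = x" by (auto simp: in_set_conv_nth)
    have "is_path E (drop k q)" using is_path_drop[OF q(1) k(1)] .
    moreover have "hd (drop k q) = x" using k by (simp add: hd_drop_conv_nth)
    moreover have "last (drop k q) = y" using k q(3) by simp
    moreover have "set (drop k q) \<subseteq> X" using q(4) by (meson order_trans set_drop_subset)
    ultimately show ?thesis by blast
  next
    case False
    have "is_path E (x # q)" using is_path_cons[OF q(1) False] step.hyps(1) q(2) by auto
    then show ?thesis using q step.prems qne by (intro exI[of _ "x # q"]) auto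
  qed
qed

lemma sym_rtrancl_Restr:
  assumes "sym R" "(x, y) \<in> (R \<inter> W \<times> W)\<^sup>*"
  shows "(y, x) \<in> (R \<inter> W \<times> W)\<^sup>*"
proof -
  have "sym (R \<inter> W \<times> W)" using assms(1) by (auto simp: sym_def)
  then have "(R \<inter> W \<times> W)\<inverse> = R \<inter> W \<times> W" by (auto simp: sym_def)
  then show ?thesis using assms(2) rtrancl_converseI[of x y "R \<inter> W \<times> W"] by (simp add: rtrancl_converse)
qed

lemma rtrancl_Restr_mono: "(x, y) \<in> (R \<inter> A \<times> A)\<^sup>* \<Longrightarrow> A \<subseteq> B \<Longrightarrow> (x, y) \<in> (R \<inter> B \<times> B)\<^sup>*"
  by (erule rtrancl_mono[THEN subsetD, rotated]) auto

lemma is_path_ne: "is_path E p \<Longrightarrow> p \<noteq> []" by (simp add: is_path_def)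

lemma is_path_hd_last_eq: "is_path E p \<Longrightarrow> hd p = last p \<Longrightarrow> p = [hd p]"
proof -
  assume a: "is_path E p" "hd p = last p"
  then have ne: "p \<noteq> []" "distinct p" by (auto simp: is_path_def)
  show ?thesis
  proof (rule ccontr)
    assume "p \<noteq> [hd p]"
    then have "length p \<ge> 2" using ne by (cases p) (auto simp: Suc_le_eq)
    then have "p ! 0 \<noteq> p ! (length p - 1)" using ne nth_eq_iff_index_eq[of p 0 "length p - 1"] by auto
    then show False using a ne by (simp add: hd_conv_nth last_conv_nth)
  qed
qed

lemma is_path_snoc_D:
  assumes "is_path E (p @ [y])" "p \<noteq> []"
  shows "is_path E p \<and> y \<notin> set p \<and> (last p, y) \<in> E"
proof -
  have "is_path E (take (length p) (p @ [y]))" using is_path_take[OF assms(1), of "length p"] assms(2) by simp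
  then have 1: "is_path E p" by simp
  have "\<forall>i. Suc i < length (p@[y]) \<longrightarrow> ((p@[y])!i, (p@[y])!Suc i) \<in> E" using assms unfolding is_path_def by blast
  moreover obtain n where n: "length p = Suc n" using assms(2) by (cases p) auto
  ultimately have "(( p@[y]) ! n, (p @ [y]) ! Suc n) \<in> E" by simp
  then have "(last p, y) \<in> E" using assms(2) n by (simp add: last_conv_nth nth_append)
  then show ?thesis using 1 assms(1) unfolding is_path_def by auto
qed

lemma tree_path_unique:
  assumes T: "is_tree VT ET"
  shows "is_path ET p \<Longrightarrow> is_path ET q \<Longrightarrow> hd p = hd q \<Longrightarrow> last p = last q \<Longrightarrow> p = q"
proof (induction "length p + length q" arbitrary: p q rule: less_induct)
  case less
  have symE: "sym ET" using T unfolding is_tree_def by auto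
  have pne: "p \<noteq> []" and qne: "q \<noteq> []" using less.prems is_path_ne by auto
  obtain p' y where p: "p = p' @ [y]" using pne by (metis rev_exhaust)
  obtain q' y' where q: "q = q' @ [y']" using qne by (metis rev_exhaust)
  have yy: "y' = y" using less.prems(4) p q by simp
  show ?case
  proof (cases "p' = []")
    case True
    then have "hd q = last q" using less.prems p by simp
    then have "q = [hd q]" using is_path_hd_last_eq[OF less.prems(2)] by blast
    moreover have "hd q = y" using less.prems(3) p True by simp
    ultimately show ?thesis using True p by simp
  next
    case p'ne: False
    show ?thesis
    proof (cases "q' = []")
      case True
      then have "hd p = last p" using less.prems q by simp
      then have "p = [hd p]" using is_path_hd_last_eq[OF less.prems(1)] by blast
      moreover have "hd p = y" using less.prems(3) q True yy by simp
      ultimately show ?thesis using True q yy by simp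
    next
      case q'ne: False
      have "is_path ET (p'@[y])" using less.prems(1) p by simp
      then have P: "is_path ET p'" "y \<notin> set p'" "(last p', y) \<in> ET"
        using is_path_snoc_D[of ET p' y] p'ne by blast+
      have "is_path ET (q'@[y])" using less.prems(2) q yy by simp
      then have Q: "is_path ET q'" "y \<notin> set q'" "(last q', y) \<in> ET"
        using is_path_snoc_D[of ET q' y] q'ne by blast+
      have hh: "hd p' = hd q'" using less.prems(3) p q p'ne q'ne by simp
      show ?thesis
      proof (cases "last p' = last q'")
        case True
        have "p' = q'" using less.hyps[of p' q'] P Q hh True p q by simp
        then show ?thesis using p q yy by simp
      next
        case False
        define W where "W = set p' \<union> set q'"
        have "(hd p', last p') \<in> (ET \<inter> W \<times> W)\<^sup>*"
          by (rule path_rtrancl[OF P(1)]) (simp add: W_def)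
        moreover have "(hd q', last q') \<in> (ET \<inter> W \<times> W)\<^sup>*"
          by (rule path_rtrancl[OF Q(1)]) (simp add: W_def)
        ultimately have "(last q', last p') \<in> (ET \<inter> W \<times> W)\<^sup>*"
        proof -
          assume a1: "(hd p', last p') \<in> (ET \<inter> W \<times> W)\<^sup>*" and a2: "(hd q', last q') \<in> (ET \<inter> W \<times> W)\<^sup>*"
          have "(last q', hd q') \<in> (ET \<inter> W \<times> W)\<^sup>*" by (rule sym_rtrancl_Restr[OF symE a2])
          then show ?thesis using a1 hh by (metis rtrancl_trans)
        qed
        moreover have "last q' \<in> W" using q'ne W_def by auto
        ultimately obtain c where c: "is_path ET c" "hd c = last q'" "last c = last p'" "set c \<subseteq> W"
          using rtrancl_path[of "last q'" "last p'" ET W] by blast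
        have yc: "y \<notin> set c" using c(4) P(2) Q(2) W_def by auto
        have "(y, hd c) \<in> ET" using Q(3) c(2) symE by (auto dest: symD)
        then have cyc: "is_path ET (y # c)" using is_path_cons[OF c(1) yc] by simp
        have "length c \<ge> 2"
          using c(2,3) False is_path_ne[OF c(1)]
          by (cases c; cases "tl c") auto
        then have "length (y # c) \<ge> 3" by simp
        moreover have "(last (y # c), hd (y # c)) \<in> ET"
          using P(3) c(3) is_path_ne[OF c(1)] by simp
        ultimately have "\<exists>xs. length xs \<ge> 3 \<and> is_path ET xs \<and> (last xs, hd xs) \<in> ET"
          using cyc by blast
        moreover have "\<not> (\<exists>xs. length xs \<ge> 3 \<and> is_path ET xs \<and> (last xs, hd xs) \<in> ET)"
          using T unfolding is_tree_def by (elim conjE)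
        ultimately show ?thesis by contradiction
      qed
    qed
  qed
qed

locale rtree =
  fixes VT :: "'a set" and ET :: "('a \<times> 'a) set" and r :: 'a
  assumes rt: "rooted_tree VT ET r"
begin

lemma T: "is_tree VT ET" and rVT: "r \<in> VT" and ETsub: "ET \<subseteq> VT \<times> VT" and symET: "sym ET"
  using rt unfolding rooted_tree_def is_tree_def by auto

lemma conn: "x \<in> VT \<Longrightarrow> y \<in> VT \<Longrightarrow> (x, y) \<in> ET\<^sup>*"
  using rt unfolding rooted_tree_def is_tree_def by auto

lemma unique: "is_path ET p \<Longrightarrow> is_path ET q \<Longrightarrow> hd p = hd q \<Longrightarrow> last p = last q \<Longrightarrow> p = q"
  using tree_path_unique[OF T] by blast

lemma path_in_VT: "is_path ET p \<Longrightarrow> hd p \<in> VT \<Longrightarrow> set p \<subseteq> VT"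
proof
  fix z assume a: "is_path ET p" "hd p \<in> VT" "z \<in> set p"
  then obtain i where i: "i < length p" "p ! i = z" by (auto simp: in_set_conv_nth)
  show "z \<in> VT"
  proof (cases i)
    case 0 then show ?thesis using a i by (simp add: hd_conv_nth is_path_ne)
  next
    case (Suc j)
    then have "(p ! j, p ! Suc j) \<in> ET" using a i unfolding is_path_def by auto
    then show ?thesis using ETsub i Suc by auto
  qed
qed

lemma exists_path: "y \<in> VT \<Longrightarrow> \<exists>p. is_path ET p \<and> hd p = r \<and> last p = y"
proof -
  assume y: "y \<in> VT"
  have "(r, y) \<in> ET\<^sup>*" using conn rVT y by auto
  moreover have "ET = ET \<inter> VT \<times> VT" using ETsub by auto
  ultimately have "(r, y) \<in> (ET \<inter> VT \<times> VT)\<^sup>*" by simp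
  then show ?thesis using rtrancl_path[of r y ET VT] rVT by auto
qed

definition tpath where "tpath y = (THE p. is_path ET p \<and> hd p = r \<and> last p = y)"

lemma tpath: "y \<in> VT \<Longrightarrow> is_path ET (tpath y) \<and> hd (tpath y) = r \<and> last (tpath y) = y"
  unfolding tpath_def
  apply (rule theI')
  apply (rule ex_ex1I)
   apply (erule exists_path)
  using unique by (elim conjE) simp

lemma tpath_eq: "is_path ET p \<Longrightarrow> hd p = r \<Longrightarrow> last p = y \<Longrightarrow> y \<in> VT \<Longrightarrow> tpath y = p"
proof -
  assume a: "is_path ET p" "hd p = r" "last p = y" "y \<in> VT"
  show ?thesis using tpath[OF a(4)] a unique[of p "tpath y"] by simp
qed

lemma path_last_VT: "is_path ET p \<Longrightarrow> hd p = r \<Longrightarrow> last p \<in> VT"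
proof -
  assume a: "is_path ET p" "hd p = r"
  then have "set p \<subseteq> VT" using path_in_VT rVT by simp
  moreover have "last p \<in> set p" using is_path_ne[OF a(1)] by simp
  ultimately show ?thesis by blast
qed

lemma tle_iff: "tree_le ET r x y \<longleftrightarrow> y \<in> VT \<and> x \<in> set (tpath y)"
proof
  assume "tree_le ET r x y"
  then obtain p where p: "is_path ET p" "hd p = r" "last p = y" "x \<in> set p" unfolding tree_le_def by blast
  then have y: "y \<in> VT" using path_last_VT by blast
  then have "tpath y = p" using tpath_eq p by blast
  then show "y \<in> VT \<and> x \<in> set (tpath y)" using y p by simp
next
  assume "y \<in> VT \<and> x \<in> set (tpath y)"
  then show "tree_le ET r x y" unfolding tree_le_def using tpath by blast
qed

lemma tpath_ne: "y \<in> VT \<Longrightarrow> tpath y \<noteq> []" using tpath is_path_ne by blast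

lemma tpath_set: "y \<in> VT \<Longrightarrow> set (tpath y) \<subseteq> VT" using tpath path_in_VT rVT by metis

lemma tpath_take:
  assumes "y \<in> VT" "k < length (tpath y)"
  shows "tpath (tpath y ! k) = take (Suc k) (tpath y)"
proof -
  have "is_path ET (take (Suc k) (tpath y))" using is_path_take tpath assms by blast
  moreover have "hd (take (Suc k) (tpath y)) = r" using tpath assms by simp
  moreover have "last (take (Suc k) (tpath y)) = tpath y ! k" using assms
    by (subst last_conv_nth) (auto simp: min_def intro!: arg_cong[where f="(!) (tpath y)"])
  moreover have "tpath y ! k \<in> VT" using tpath_set assms nth_mem by blast
  ultimately show ?thesis by (rule tpath_eq)
qed

definition ht where "ht y = length (tpath y) - 1"

lemma ht_nth: "y \<in> VT \<Longrightarrow> k < length (tpath y) \<Longrightarrow> ht (tpath y ! k) = k"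
  using tpath_take unfolding ht_def by simp

lemma tpath_last: "y \<in> VT \<Longrightarrow> tpath y ! ht y = y"
proof -
  assume y: "y \<in> VT"
  have "last (tpath y) = tpath y ! (length (tpath y) - 1)" using tpath_ne[OF y] by (rule last_conv_nth)
  then show ?thesis using tpath[OF y] unfolding ht_def by simp
qed

lemma tle_VT: "tree_le ET r x y \<Longrightarrow> x \<in> VT \<and> y \<in> VT"
  using tle_iff tpath_set by blast

lemma tle_refl: "x \<in> VT \<Longrightarrow> tree_le ET r x x"
proof -
  assume x: "x \<in> VT"
  have "last (tpath x) \<in> set (tpath x)" using tpath_ne[OF x] by simp
  then show ?thesis using tpath[OF x] tle_iff x by simp
qed

lemma tle_root: "x \<in> VT \<Longrightarrow> tree_le ET r r x"
proof -
  assume x: "x \<in> VT"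
  have "hd (tpath x) \<in> set (tpath x)" using tpath_ne[OF x] by simp
  then show ?thesis using tpath[OF x] tle_iff x by simp
qed

lemma tle_nth: "tree_le ET r x y \<Longrightarrow> y \<in> VT \<and> ht x < length (tpath y) \<and> tpath y ! ht x = x"
proof -
  assume "tree_le ET r x y"
  then have y: "y \<in> VT" and "x \<in> set (tpath y)" using tle_iff by auto
  then obtain k where k: "k < length (tpath y)" "tpath y ! k = x" by (auto simp: in_set_conv_nth)
  then show ?thesis using ht_nth[OF y k(1)] y by auto
qed

lemma tle_ht: "tree_le ET r x y \<Longrightarrow> ht x \<le> ht y"
  using tle_nth unfolding ht_def by fastforce

lemma tle_ht_eq: "tree_le ET r x y \<Longrightarrow> ht x = ht y \<Longrightarrow> x = y"
proof -
  assume a: "tree_le ET r x y" "ht x = ht y"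
  then have "tpath y ! ht x = x" "y \<in> VT" using tle_nth[OF a(1)] by auto
  then show ?thesis using tpath_last a(2) by simp
qed

lemma tle_antisym: "tree_le ET r x y \<Longrightarrow> tree_le ET r y x \<Longrightarrow> x = y"
  using tle_ht tle_ht_eq le_antisym by blast

lemma tle_trans: "tree_le ET r x y \<Longrightarrow> tree_le ET r y z \<Longrightarrow> tree_le ET r x z"
proof -
  assume xy: "tree_le ET r x y" and yz: "tree_le ET r y z"
  from tle_nth[OF yz] have z: "z \<in> VT" and k: "ht y < length (tpath z)" "tpath z ! ht y = y" by auto
  have "tpath y = take (Suc (ht y)) (tpath z)" using tpath_take[OF z k(1)] k(2) by simp
  then have "set (tpath y) \<subseteq> set (tpath z)" by (metis set_take_subset)
  then show ?thesis using xy z tle_iff by auto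
qed

lemma take_mem: "k < length xs \<Longrightarrow> k < n \<Longrightarrow> xs ! k \<in> set (take n xs)"
proof -
  assume "k < length xs" "k < n"
  then have "take n xs ! k = xs ! k" "k < length (take n xs)" by auto
  then show ?thesis by (metis nth_mem)
qed

lemma tle_chain: "tree_le ET r a c \<Longrightarrow> tree_le ET r b c \<Longrightarrow> comparable_T ET r a b"
proof -
  assume ac: "tree_le ET r a c" and bc: "tree_le ET r b c"
  from tle_nth[OF ac] tle_nth[OF bc] have c: "c \<in> VT"
    and a: "ht a < length (tpath c)" "tpath c ! ht a = a"
    and b: "ht b < length (tpath c)" "tpath c ! ht b = b" by auto
  show ?thesis
  proof (cases "ht a \<le> ht b")
    case True
    have "tpath b = take (Suc (ht b)) (tpath c)" using tpath_take[OF c b(1)] b(2) by simp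
    moreover have "tpath c ! ht a \<in> set (take (Suc (ht b)) (tpath c))" using True a by (intro take_mem) auto
    ultimately have "a \<in> set (tpath b)" using a by simp
    moreover have "b \<in> VT" using tle_VT bc by blast
    ultimately show ?thesis unfolding comparable_T_def using tle_iff by blast
  next
    case False
    have "tpath a = take (Suc (ht a)) (tpath c)" using tpath_take[OF c a(1)] a(2) by simp
    moreover have "tpath c ! ht b \<in> set (take (Suc (ht a)) (tpath c))" using False b by (intro take_mem) auto
    ultimately have "b \<in> set (tpath a)" using b by simp
    moreover have "a \<in> VT" using tle_VT ac by blast
    ultimately show ?thesis unfolding comparable_T_def using tle_iff by blast
  qed
qed

end

lemma is_path_mono: "is_path A p \<Longrightarrow> A \<subseteq> B \<Longrightarrow> is_path B p"
  unfolding is_path_def by blast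

lemma path_gconnected:
  assumes "sym E" "is_path E p"
  shows "gconnected E (set p)"
  unfolding gconnected_def
proof (intro ballI)
  fix x y assume "x \<in> set p" "y \<in> set p"
  then obtain i j where i: "i < length p" "p ! i = x" and j: "j < length p" "p ! j = y"
    by (auto simp: in_set_conv_nth)
  show "(x, y) \<in> (E \<inter> set p \<times> set p)\<^sup>*"
  proof (cases "i \<le> j")
    case True
    then show ?thesis using path_rtrancl_nth[OF assms(2) True j(1)] i j by simp
  next
    case False
    then have "(y, x) \<in> (E \<inter> set p \<times> set p)\<^sup>*" using path_rtrancl_nth[OF assms(2), of j i "set p"] i j by simp
    then show ?thesis using sym_rtrancl_Restr[OF assms(1)] by blast
  qed
qed

lemma path_graph_F:
  assumes "sym E" "is_path E p" "set p \<subseteq> V"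
  shows "set p \<in> graph_F V E"
  using path_gconnected[OF assms(1,2)] assms(3) unfolding graph_F_def by auto

lemma path_graph_C:
  assumes "sym E" "is_path E p" "set p \<subseteq> V"
  shows "set p \<in> graph_C V E"
  using path_graph_F[OF assms] assms(3) unfolding graph_C_def conn_sets_def by blast

lemma graph_C_path:
  assumes "C \<in> graph_C V E" "x \<in> C" "y \<in> C"
  shows "\<exists>p. is_path E p \<and> hd p = x \<and> last p = y \<and> set p \<subseteq> C"
proof -
  obtain X where X: "X \<in> graph_F V E" "X \<subseteq> C" "x \<in> X" "y \<in> X"
    using assms unfolding graph_C_def conn_sets_def by blast
  then have "(x, y) \<in> (E \<inter> X \<times> X)\<^sup>*" unfolding graph_F_def gconnected_def by blast
  then obtain p where "is_path E p" "hd p = x" "last p = y" "set p \<subseteq> X"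
    using rtrancl_path[of x y E X] X(3) by blast
  then show ?thesis using X(2) by blast
qed

lemma conn_setsD: "C \<in> conn_sets S F \<Longrightarrow> x \<in> C \<Longrightarrow> y \<in> C \<Longrightarrow> \<exists>X\<in>F. X \<subseteq> C \<and> x \<in> X \<and> y \<in> X"
  unfolding conn_sets_def by blast

context rtree begin

lemma sep_path:
  assumes NT: "\<And>p. is_path E p \<Longrightarrow> length p \<ge> 2 \<Longrightarrow> hd p \<in> VT \<Longrightarrow> last p \<in> VT
            \<Longrightarrow> (\<forall>i. 0 < i \<and> i < length p - 1 \<longrightarrow> p ! i \<notin> VT)
            \<Longrightarrow> comparable_T ET r (hd p) (last p)"
  shows "is_path E p \<Longrightarrow> hd p \<in> VT \<Longrightarrow> last p \<in> VT \<Longrightarrow>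
     \<exists>w\<in>set p. tree_le ET r w (hd p) \<and> tree_le ET r w (last p)"
proof (induction "length p" arbitrary: p rule: less_induct)
  case less
  have pne: "p \<noteq> []" using less.prems is_path_ne by blast
  show ?case
  proof (cases "\<exists>i. 0 < i \<and> i < length p - 1 \<and> p ! i \<in> VT")
    case True
    then obtain i where i: "0 < i" "i < length p - 1" "p ! i \<in> VT" by blast
    define p1 where "p1 = take (Suc i) p"
    define p2 where "p2 = drop i p"
    have P1: "is_path E p1" "hd p1 = hd p" "last p1 = p ! i" "length p1 < length p" "set p1 \<subseteq> set p"
      unfolding p1_def using is_path_take[OF less.prems(1)] i pne
      by (auto simp: last_conv_nth min_def hd_conv_nth intro: set_take_subset[THEN subsetD])
    have P2: "is_path E p2" "hd p2 = p ! i" "last p2 = last p" "length p2 < length p" "set p2 \<subseteq> set p"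
      unfolding p2_def using is_path_drop[OF less.prems(1)] i pne
      by (auto simp: hd_drop_conv_nth intro: set_drop_subset[THEN subsetD])
    obtain w1 where w1: "w1 \<in> set p1" "tree_le ET r w1 (hd p)" "tree_le ET r w1 (p ! i)"
      using less.hyps[OF P1(4) P1(1)] P1 less.prems i by auto
    obtain w2 where w2: "w2 \<in> set p2" "tree_le ET r w2 (p ! i)" "tree_le ET r w2 (last p)"
      using less.hyps[OF P2(4) P2(1)] P2 less.prems i by auto
    have "comparable_T ET r w1 w2" using tle_chain w1(3) w2(2) by blast
    then show ?thesis unfolding comparable_T_def
    proof
      assume "tree_le ET r w1 w2"
      then show ?thesis using w1 w2 P1(5) tle_trans by blast
    next
      assume "tree_le ET r w2 w1"
      then show ?thesis using w1 w2 P2(5) tle_trans by blast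
    qed
  next
    case False
    show ?thesis
    proof (cases "length p \<ge> 2")
      case True
      have "comparable_T ET r (hd p) (last p)" using NT[OF less.prems(1) True less.prems(2,3)] False by blast
      then show ?thesis unfolding comparable_T_def
        using tle_refl less.prems pne by (metis hd_in_set last_in_set)
    next
      case False
      then have "length p = 1" using pne by (cases p) (auto simp: Suc_le_eq)
      then have "hd p = last p" by (cases p) auto
      then show ?thesis using tle_refl less.prems pne by (metis hd_in_set)
    qed
  qed
qed

end

lemma a_to_b:
  assumes symE: "sym E" and NTG: "normal_tree_graph V E VT ET r"
  shows "normal_tree_cn V (graph_C V E) VT ET r"
proof -
  have rt: "rooted_tree VT ET r" and VTV: "VT \<subseteq> V" and ETE: "ET \<subseteq> E"
    and NT: "\<And>p. is_path E p \<Longrightarrow> length p \<ge> 2 \<Longrightarrow> hd p \<in> VT \<Longrightarrow> last p \<in> VT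
            \<Longrightarrow> (\<forall>i. 0 < i \<and> i < length p - 1 \<longrightarrow> p ! i \<notin> VT)
            \<Longrightarrow> comparable_T ET r (hd p) (last p)"
    using NTG unfolding normal_tree_graph_def by blast+
  interpret rtree VT ET r using rt by unfold_locales
  have W1: "\<forall>C\<in>graph_C V E. \<forall>u\<in>C \<inter> VT. \<forall>v\<in>C \<inter> VT. \<not> comparable_T ET r u v \<longrightarrow>
           (\<exists>w\<in>C. tree_le ET r w u \<and> tree_le ET r w v)"
  proof (intro ballI impI)
    fix C u v assume C: "C \<in> graph_C V E" and u: "u \<in> C \<inter> VT" and v: "v \<in> C \<inter> VT"
    obtain p where p: "is_path E p" "hd p = u" "last p = v" "set p \<subseteq> C"
      using graph_C_path[OF C] u v by blast
    have "hd p \<in> VT" "last p \<in> VT" using p u v by auto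
    then obtain w where w: "w \<in> set p" "tree_le ET r w (hd p)" "tree_le ET r w (last p)"
      using sep_path[OF NT p(1)] by blast
    show "\<exists>w\<in>C. tree_le ET r w u \<and> tree_le ET r w v"
      using w p by (intro bexI[of _ w]) auto
  qed
  have W2: "\<forall>u\<in>VT. \<forall>v\<in>VT. tree_le ET r u v \<longrightarrow>
           (\<exists>C\<in>graph_C V E. u \<in> C \<and> v \<in> C \<and> C \<inter> down_open ET r u = {})"
  proof (intro ballI impI)
    fix u v assume u: "u \<in> VT" and v: "v \<in> VT" and uv: "tree_le ET r u v"
    from tle_nth[OF uv] have k: "ht u < length (tpath v)" "tpath v ! ht u = u" by auto
    define q where "q = drop (ht u) (tpath v)"
    have q: "is_path ET q" using is_path_drop[OF conjunct1[OF tpath[OF v]] k(1)] q_def by simp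
    then have qE: "is_path E q" using is_path_mono ETE by blast
    have qV: "set q \<subseteq> V" using tpath_set[OF v] VTV q_def by (meson order_trans set_drop_subset)
    have "set q \<in> graph_C V E" using path_graph_C[OF symE qE qV] .
    moreover have "u \<in> set q" using k q_def by (metis Cons_nth_drop_Suc list.set_intros(1))
    moreover have "v \<in> set q" using q_def tpath[OF v] k(1)
      by (metis last_drop last_in_set drop_eq_Nil not_le)
    moreover have "set q \<inter> down_open ET r u = {}"
    proof (rule ccontr)
      assume "set q \<inter> down_open ET r u \<noteq> {}"
      then obtain z where z: "z \<in> set q" "tree_le ET r z u" "z \<noteq> u" unfolding down_open_def by blast
      then obtain j where j: "j < length q" "q ! j = z" by (auto simp: in_set_conv_nth)
      have "z = tpath v ! (ht u + j)" using j q_def k by simp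
      moreover have "ht u + j < length (tpath v)" using j q_def by simp
      ultimately have "ht z = ht u + j" using ht_nth[OF v] by simp
      moreover have "ht z \<le> ht u" using tle_ht[OF z(2)] .
      ultimately have "ht z = ht u" by simp
      then show False using tle_ht_eq[OF z(2)] z(3) by simp
    qed
    ultimately show "\<exists>C\<in>graph_C V E. u \<in> C \<and> v \<in> C \<and> C \<inter> down_open ET r u = {}" by blast
  qed
  have R: "\<forall>f. rooted_ray ET r f \<longrightarrow> (\<exists>N. necklace (graph_C V E) N \<and> finite (range f - N))"
  proof (intro allI impI)
    fix f assume f: "rooted_ray ET r f"
    then have inj: "inj f" and fe: "\<And>n. (f n, f (Suc n)) \<in> ET" unfolding rooted_ray_def by auto
    have fV: "\<And>n. f n \<in> V"
    proof -
      fix n have "(f n, f (Suc n)) \<in> VT \<times> VT" by (rule subsetD[OF ETsub fe[of n]])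
      then show "f n \<in> V" using VTV by auto
    qed
    have segpath: "\<And>i k. is_path E (map f [i..<i + Suc k])"
    proof -
      fix i k
      have "distinct (map f [i..<i + Suc k])" 
        by (rule distinct_map[THEN iffD2], rule conjI, simp, rule inj_on_subset[OF inj subset_UNIV])
      moreover have "\<forall>m. Suc m < length (map f [i..<i + Suc k]) \<longrightarrow>
          (map f [i..<i + Suc k] ! m, map f [i..<i + Suc k] ! Suc m) \<in> E"
      proof (intro allI impI)
        fix m assume "Suc m < length (map f [i..<i + Suc k])"
        then have "m < Suc k" "Suc m < Suc k" by auto
        then have "map f [i..<i + Suc k] ! m = f (i + m)" "map f [i..<i + Suc k] ! Suc m = f (Suc (i + m))"
          by (auto simp del: upt_Suc)
        then show "(map f [i..<i + Suc k] ! m, map f [i..<i + Suc k] ! Suc m) \<in> E" using subsetD[OF ETE fe[of "i+m"]] by simp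
      qed
      ultimately show "is_path E (map f [i..<i + Suc k])" unfolding is_path_def by simp
    qed
    have seg: "\<And>i k. f ` {i..i+k} \<in> graph_C V E"
    proof -
      fix i k
      have e: "set (map f [i..<i + Suc k]) = f ` {i..i+k}"
        by (simp only: set_map set_upt add_Suc_right atLeastLessThanSuc_atLeastAtMost)
      have "set (map f [i..<i + Suc k]) \<subseteq> V" using fV by auto
      then have "set (map f [i..<i + Suc k]) \<in> graph_C V E" by (rule path_graph_C[OF symE segpath])
      then show "f ` {i..i+k} \<in> graph_C V E" using e by simp
    qed
    define H where "H n = {f n, f (Suc n)}" for n
    have Hseg: "H n = f ` {n..n+1}" for n unfolding H_def by (auto simp: atLeastAtMost_iff le_Suc_eq)
    have "range f \<in> graph_C V E"
      unfolding graph_C_def conn_sets_def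
    proof (intro CollectI conjI ballI)
      show "range f \<subseteq> V" using fV by auto
    next
      fix x y assume "x \<in> range f" "y \<in> range f"
      then obtain i j where ij: "x = f i" "y = f j" by auto
      define a where "a = min i j"
      define k where "k = max i j - min i j"
      have "f ` {a..a+k} \<in> graph_C V E" using seg by blast
      moreover have "x \<in> f ` {a..a+k}" "y \<in> f ` {a..a+k}" using ij by (auto simp: a_def k_def)
      ultimately obtain X where X: "X \<in> graph_F V E" "X \<subseteq> f ` {a..a+k}" "x \<in> X" "y \<in> X"
        using conn_setsD by (metis graph_C_def)
      have "f ` {a..a+k} \<subseteq> range f" by (rule image_mono) simp
      then have "X \<subseteq> range f" using X(2) by (rule order_trans[rotated])
      then show "\<exists>X\<in>graph_F V E. X \<subseteq> range f \<and> x \<in> X \<and> y \<in> X" using X by blast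
    qed
    moreover have "\<forall>n. finite (H n) \<and> H n \<in> graph_C V E"
    proof
      fix n show "finite (H n) \<and> H n \<in> graph_C V E" using seg[of n 1] Hseg[of n] H_def by simp
    qed
    moreover have "range f = (\<Union>n. H n)" unfolding H_def by auto
    moreover have "\<forall>i j. H i \<inter> H j \<noteq> {} \<longleftrightarrow> (i \<le> j + 1 \<and> j \<le> i + 1)"
      unfolding H_def using inj by (auto simp: inj_eq)
    ultimately have "necklace (graph_C V E) (range f)" unfolding necklace_def by blast
    then show "\<exists>N. necklace (graph_C V E) N \<and> finite (range f - N)" by auto
  qed
  show ?thesis unfolding normal_tree_cn_def weak_normal_tree_def
    using rt VTV W1 W2 R by blast
qed

inductive anc :: "('a \<Rightarrow> 'a) \<Rightarrow> 'a \<Rightarrow> 'a \<Rightarrow> 'a \<Rightarrow> bool" for p r where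
  anc_refl: "anc p r y y"
| anc_step: "anc p r x (p y) \<Longrightarrow> y \<noteq> r \<Longrightarrow> anc p r x y"

lemma anc_cases': "anc p r x y \<longleftrightarrow> x = y \<or> (y \<noteq> r \<and> anc p r x (p y))"
proof
  assume "anc p r x y" then show "x = y \<or> (y \<noteq> r \<and> anc p r x (p y))" by (cases rule: anc.cases) blast+
next
  assume "x = y \<or> (y \<noteq> r \<and> anc p r x (p y))" then show "anc p r x y"
  proof
    assume "x = y" then show ?thesis by (simp add: anc_refl)
  next
    assume "y \<noteq> r \<and> anc p r x (p y)" then show ?thesis by (simp add: anc_step)
  qed
qed

lemma anc_root_only: "anc p r x r \<Longrightarrow> x = r"
  by (cases rule: anc.cases) blast+

definition pedges :: "'a set \<Rightarrow> ('a \<Rightarrow> 'a) \<Rightarrow> 'a \<Rightarrow> ('a \<times> 'a) set" where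
  "pedges A p r = {(x, p x) | x. x \<in> A \<and> x \<noteq> r} \<union> {(p x, x) | x. x \<in> A \<and> x \<noteq> r}"

lemma is_path_snoc: "is_path E q \<Longrightarrow> y \<notin> set q \<Longrightarrow> (last q, y) \<in> E \<Longrightarrow> is_path E (q @ [y])"
proof -
  assume a: "is_path E q" "y \<notin> set q" "(last q, y) \<in> E"
  have ne: "q \<noteq> []" using a(1) is_path_ne by blast
  have "\<forall>i. Suc i < length (q @ [y]) \<longrightarrow> ((q @ [y]) ! i, (q @ [y]) ! Suc i) \<in> E"
  proof (intro allI impI)
    fix i assume i: "Suc i < length (q @ [y])"
    show "((q @ [y]) ! i, (q @ [y]) ! Suc i) \<in> E"
    proof (cases "Suc i < length q")
      case True
      then show ?thesis using a(1) unfolding is_path_def by (simp add: nth_append)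
    next
      case False
      then have "i = length q - 1" using i by simp
      then show ?thesis using a(3) ne by (simp add: nth_append last_conv_nth)
    qed
  qed
  then show ?thesis using a ne unfolding is_path_def by simp
qed

locale ptree =
  fixes A :: "'a set" and p :: "'a \<Rightarrow> 'a" and h :: "'a \<Rightarrow> nat" and r :: 'a
  assumes rA: "r \<in> A"
    and pA: "\<And>x. x \<in> A \<Longrightarrow> x \<noteq> r \<Longrightarrow> p x \<in> A"
    and ph: "\<And>x. x \<in> A \<Longrightarrow> x \<noteq> r \<Longrightarrow> h (p x) < h x"
begin

abbreviation "PE \<equiv> pedges A p r"

lemma anc_A: "anc p r x y \<Longrightarrow> y \<in> A \<Longrightarrow> x \<in> A"
  by (induction rule: anc.induct) (auto intro: pA)

lemma anc_h: "anc p r x y \<Longrightarrow> y \<in> A \<Longrightarrow> h x \<le> h y \<and> (x \<noteq> y \<longrightarrow> h x < h y)"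
proof (induction rule: anc.induct)
  case (anc_refl y) then show ?case by simp
next
  case (anc_step x y)
  then have "h x \<le> h (p y)" using pA by auto
  moreover have "h (p y) < h y" using ph anc_step by auto
  ultimately show ?case by simp
qed

lemma anc_trans0: "anc p r y z \<Longrightarrow> anc p r x y \<Longrightarrow> anc p r x z"
  by (induction rule: anc.induct) (auto intro: anc_step)

lemma anc_trans: "anc p r x y \<Longrightarrow> anc p r y z \<Longrightarrow> anc p r x z"
  using anc_trans0 by blast

lemma anc_antisym: "anc p r x y \<Longrightarrow> anc p r y x \<Longrightarrow> y \<in> A \<Longrightarrow> x = y"
  using anc_h anc_A by (metis leD)

lemma anc_root: "y \<in> A \<Longrightarrow> anc p r r y"
proof (induction "h y" arbitrary: y rule: less_induct)
  case less
  show ?case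
  proof (cases "y = r")
    case True then show ?thesis by (simp add: anc_refl)
  next
    case False
    then have "anc p r r (p y)" using less.hyps ph pA less.prems by blast
    then show ?thesis using False by (rule anc_step)
  qed
qed

lemma anc_chain: "anc p r a c \<Longrightarrow> anc p r b c \<Longrightarrow> anc p r a b \<or> anc p r b a"
proof (induction a c arbitrary: b rule: anc.induct)
  case (anc_refl y)
  then show ?case by simp
next
  case (anc_step x y)
  have "b = y \<or> anc p r b (p y)" using anc_step.prems by (cases rule: anc.cases) blast+
  then show ?case
  proof
    assume "b = y" then show ?thesis using anc.anc_step[OF anc_step.hyps] by simp
  next
    assume "anc p r b (p y)" then show ?thesis using anc_step.IH by blast
  qed
qed

lemma PE_sub: "PE \<subseteq> A \<times> A" unfolding pedges_def using pA rA by auto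

lemma PE_sym: "sym PE" unfolding pedges_def sym_def by auto

lemma PE_cases: "(x, y) \<in> PE \<Longrightarrow> (x \<in> A \<and> x \<noteq> r \<and> y = p x) \<or> (y \<in> A \<and> y \<noteq> r \<and> x = p y)"
  unfolding pedges_def by auto

lemma PE_irrefl: "irrefl PE"
  unfolding irrefl_def
proof (intro allI notI)
  fix x assume "(x, x) \<in> PE"
  then have "x \<in> A \<and> x \<noteq> r \<and> x = p x" using PE_cases by blast
  then show False using ph[of x] by simp
qed

lemma root_conn: "y \<in> A \<Longrightarrow> (r, y) \<in> PE\<^sup>*"
proof (induction "h y" arbitrary: y rule: less_induct)
  case less
  show ?case
  proof (cases "y = r")
    case True then show ?thesis by simp
  next
    case False
    then have "(r, p y) \<in> PE\<^sup>*" using less.hyps ph pA less.prems by blast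
    moreover have "(p y, y) \<in> PE" using less.prems False unfolding pedges_def by blast
    ultimately show ?thesis by (rule rtrancl_into_rtrancl)
  qed
qed

lemma PE_conn: "x \<in> A \<Longrightarrow> y \<in> A \<Longrightarrow> (x, y) \<in> PE\<^sup>*"
proof -
  assume x: "x \<in> A" and y: "y \<in> A"
  have "(r, x) \<in> PE\<^sup>*" using root_conn x .
  then have "(x, r) \<in> PE\<^sup>*" using PE_sym by (metis sym_conv_converse_eq rtrancl_converseI)
  then show ?thesis using root_conn[OF y] by (rule rtrancl_trans)
qed

lemma cyc_adj:
  assumes "is_path E xs" "(last xs, hd xs) \<in> E" "i < length xs"
  shows "(xs ! i, xs ! (Suc i mod length xs)) \<in> E"
proof (cases "Suc i < length xs")
  case True
  then show ?thesis using assms(1) unfolding is_path_def by simp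
next
  case False
  then have si: "Suc i = length xs" using assms(3) by simp
  then have "i = length xs - 1" "Suc i mod length xs = 0" by auto
  moreover have "xs \<noteq> []" using assms(1) is_path_ne by blast
  ultimately show ?thesis using assms(2) by (simp add: last_conv_nth hd_conv_nth)
qed

lemma no_cycle: "\<not> (\<exists>xs. length xs \<ge> 3 \<and> is_path PE xs \<and> (last xs, hd xs) \<in> PE)"
proof
  assume "\<exists>xs. length xs \<ge> 3 \<and> is_path PE xs \<and> (last xs, hd xs) \<in> PE"
  then obtain xs where xs: "length xs \<ge> 3" "is_path PE xs" "(last xs, hd xs) \<in> PE" by blast
  define n where "n = length xs"
  have dist: "distinct xs" using xs(2) unfolding is_path_def by simp
  have "finite (h ` set xs)" "h ` set xs \<noteq> {}" using xs(1) by auto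
  then have "Max (h ` set xs) \<in> h ` set xs" by (rule Max_in)
  then obtain m where m: "m < n" "h (xs ! m) = Max (h ` set xs)" unfolding n_def by (auto simp: in_set_conv_nth)
  have mx: "\<And>i. i < n \<Longrightarrow> h (xs ! i) \<le> h (xs ! m)"
    using m(2) \<open>finite (h ` set xs)\<close> unfolding n_def by (simp add: Max_ge)
  define a where "a = Suc m mod n"
  define b where "b = (m + n - 1) mod n"
  have n0: "0 < n" using xs(1) unfolding n_def by linarith
  have an: "a < n" and bn: "b < n" unfolding a_def b_def using mod_less_divisor[OF n0] by auto
  have "Suc b mod n = m"
  proof -
    have "Suc b mod n = Suc (m + n - 1) mod n" unfolding b_def by (simp add: mod_Suc_eq)
    also have "Suc (m + n - 1) = m + n" using xs(1) n_def by simp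
    finally show ?thesis using m(1) by simp
  qed
  have e1: "(xs ! m, xs ! a) \<in> PE" using cyc_adj[OF xs(2,3)] m(1) unfolding a_def n_def by simp
  have e2: "(xs ! b, xs ! m) \<in> PE" using cyc_adj[OF xs(2,3) bn[unfolded n_def]] \<open>Suc b mod n = m\<close> n_def by simp
  have n3: "n \<ge> 3" using xs(1) n_def by simp
  have aval: "a = (if Suc m < n then Suc m else 0)"
  proof (cases "Suc m < n")
    case False then have "Suc m = n" using m(1) by simp
    then show ?thesis unfolding a_def by simp
  qed (simp add: a_def)
  have bval: "b = (if m = 0 then n - 1 else m - 1)"
  proof (cases "m = 0")
    case True then show ?thesis unfolding b_def using n3 by simp
  next
    case False
    then have "m + n - 1 = (m - 1) + n" by simp
    then have "b = (m - 1) mod n" unfolding b_def by simp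
    then show ?thesis using False m(1) by simp
  qed
  have ab: "a \<noteq> b" using aval bval n3 m(1) by (auto split: if_splits)
  have par: "\<And>z. (xs ! m, z) \<in> PE \<Longrightarrow> h z \<le> h (xs ! m) \<Longrightarrow> z = p (xs ! m)"
  proof -
    fix z assume e: "(xs ! m, z) \<in> PE" and hz: "h z \<le> h (xs ! m)"
    from PE_cases[OF e] show "z = p (xs ! m)"
    proof
      assume "z \<in> A \<and> z \<noteq> r \<and> xs ! m = p z"
      then have "h (xs ! m) < h z" using ph by auto
      then show ?thesis using hz by simp
    qed auto
  qed
  have "xs ! a = p (xs ! m)" using par[OF e1] mx[OF an] by simp
  moreover have "xs ! b = p (xs ! m)" using par PE_sym e2 mx[OF bn] by (meson symD)
  ultimately have "xs ! a = xs ! b" by simp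
  then show False using ab dist an bn unfolding n_def by (simp add: nth_eq_iff_index_eq)
qed

lemma tree: "rooted_tree A PE r"
  unfolding rooted_tree_def is_tree_def
  using PE_sub PE_sym PE_irrefl PE_conn no_cycle rA by blast

lemma anc_path: "y \<in> A \<Longrightarrow> \<exists>q. is_path PE q \<and> hd q = r \<and> last q = y \<and> set q = {x. anc p r x y}"
proof (induction "h y" arbitrary: y rule: less_induct)
  case less
  show ?case
  proof (cases "y = r")
    case True
    then show ?thesis using anc_root_only by (intro exI[of _ "[r]"]) (auto intro: anc_refl)
  next
    case False
    then obtain q where q: "is_path PE q" "hd q = r" "last q = p y" "set q = {x. anc p r x (p y)}"
      using less.hyps ph pA less.prems by blast
    have yq: "y \<notin> set q"
    proof
      assume "y \<in> set q"
      then have "anc p r y (p y)" using q(4) by simp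
      then have "h y \<le> h (p y)" using anc_h pA less.prems False by blast
      then show False using ph[OF less.prems False] by simp
    qed
    have "(p y, y) \<in> PE" using less.prems False unfolding pedges_def by blast
    then have "(last q, y) \<in> PE" using q(3) by simp
    then have "is_path PE (q @ [y])" using is_path_snoc[OF q(1) yq] by blast
    moreover have "hd (q @ [y]) = r" using q(1,2) is_path_ne by fastforce
    moreover have "set (q @ [y]) = {x. anc p r x y}"
    proof -
      have "\<And>x. anc p r x y \<longleftrightarrow> x = y \<or> anc p r x (p y)" using anc_cases'[of p r _ y] False by simp
      then show ?thesis using q(4) by auto
    qed
    ultimately show ?thesis by auto
  qed
qed

lemma tle_anc: "tree_le PE r x y \<longleftrightarrow> y \<in> A \<and> anc p r x y"
proof -
  interpret rtree A PE r using tree by unfold_locales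
  show ?thesis
  proof
    assume "tree_le PE r x y"
    then have y: "y \<in> A" and x: "x \<in> set (tpath y)" using tle_iff by auto
    obtain q where q: "is_path PE q" "hd q = r" "last q = y" "set q = {x. anc p r x y}"
      using anc_path[OF y] by blast
    then have "tpath y = q" using tpath_eq y by blast
    then show "y \<in> A \<and> anc p r x y" using x q(4) y by simp
  next
    assume a: "y \<in> A \<and> anc p r x y"
    obtain q where q: "is_path PE q" "hd q = r" "last q = y" "set q = {x. anc p r x y}"
      using anc_path a by blast
    then show "tree_le PE r x y" unfolding tree_le_def using a by blast
  qed
qed

end

lemma rtrancl_Restr_in: "(a, b) \<in> (R \<inter> B \<times> B)\<^sup>* \<Longrightarrow> a \<in> B \<Longrightarrow> b \<in> B"
  by (induction rule: rtrancl_induct) auto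

lemma first_exit:
  assumes "(a, b) \<in> (E \<inter> V \<times> V)\<^sup>*" "a \<in> V - A" "b \<in> A"
  shows "\<exists>d c. (a, d) \<in> (E \<inter> (V - A) \<times> (V - A))\<^sup>* \<and> (d, c) \<in> E \<and> c \<in> A"
  using assms
proof (induction rule: converse_rtrancl_induct)
  case base then show ?case by simp
next
  case (step a z)
  show ?case
  proof (cases "z \<in> A")
    case True then show ?thesis using step.hyps(1) by blast
  next
    case False
    then have "z \<in> V - A" using step.hyps(1) by auto
    then obtain d c where dc: "(z, d) \<in> (E \<inter> (V - A) \<times> (V - A))\<^sup>*" "(d, c) \<in> E" "c \<in> A"
      using step.IH step.prems by blast
    have "(a, z) \<in> E \<inter> (V - A) \<times> (V - A)" using step.hyps(1) step.prems \<open>z \<in> V - A\<close> by auto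
    then have "(a, d) \<in> (E \<inter> (V - A) \<times> (V - A))\<^sup>*" using dc(1) by (rule converse_rtrancl_into_rtrancl)
    then show ?thesis using dc by blast
  qed
qed

locale cta =
  fixes V :: "'a set" and E :: "('a \<times> 'a) set" and XT :: "'a set" and ET0 :: "('a \<times> 'a) set" and r0 :: 'a
  assumes EV: "E \<subseteq> V \<times> V" and symE: "sym E"
    and WN: "weak_normal_tree V (graph_C V E) XT ET0 r0"
begin

sublocale rtree XT ET0 r0
  using WN unfolding weak_normal_tree_def by unfold_locales blast

lemma XTV: "XT \<subseteq> V" using WN unfolding weak_normal_tree_def by blast

lemma W1: "C \<in> graph_C V E \<Longrightarrow> u \<in> C \<inter> XT \<Longrightarrow> v \<in> C \<inter> XT \<Longrightarrow> \<not> comparable_T ET0 r0 u v \<Longrightarrow>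
           \<exists>w\<in>C. tree_le ET0 r0 w u \<and> tree_le ET0 r0 w v"
  using WN unfolding weak_normal_tree_def by blast

lemma W2: "u \<in> XT \<Longrightarrow> v \<in> XT \<Longrightarrow> tree_le ET0 r0 u v \<Longrightarrow>
           \<exists>C\<in>graph_C V E. u \<in> C \<and> v \<in> C \<and> C \<inter> down_open ET0 r0 u = {}"
  using WN unfolding weak_normal_tree_def by blast

lemma ht_root: "ht r0 = 0"
proof -
  have "tpath r0 = [r0]" using tpath_eq[of "[r0]" r0] rVT by simp
  then show ?thesis unfolding ht_def by simp
qed

lemma conn_root: "s \<in> XT \<Longrightarrow> (s, r0) \<in> (E \<inter> V \<times> V)\<^sup>*"
proof -
  assume s: "s \<in> XT"
  obtain C where C: "C \<in> graph_C V E" "r0 \<in> C" "s \<in> C" using W2[OF rVT s tle_root[OF s]] by blast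
  obtain c where c: "is_path E c" "hd c = s" "last c = r0" "set c \<subseteq> C" using graph_C_path[OF C(1) C(3) C(2)] by blast
  have "C \<subseteq> V" using C(1) unfolding graph_C_def conn_sets_def by blast
  then have "(hd c, last c) \<in> (E \<inter> V \<times> V)\<^sup>*" using path_rtrancl[OF c(1)] c(4) by blast
  then show ?thesis using c by simp
qed

definition canc where "canc p a b \<longleftrightarrow> anc p r0 a b \<or> anc p r0 b a"

definition normalP where
  "normalP A p \<longleftrightarrow> (\<forall>P. is_path E P \<and> 2 \<le> length P \<and> hd P \<in> A \<and> last P \<in> A
      \<and> (\<forall>i. 0 < i \<and> i < length P - 1 \<longrightarrow> P ! i \<notin> A) \<longrightarrow> canc p (hd P) (last P))"

definition Inv where
  "Inv n A p h \<longleftrightarrow> r0 \<in> A \<and> A \<subseteq> V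
     \<and> (\<forall>x\<in>A. x \<noteq> r0 \<longrightarrow> p x \<in> A \<and> h (p x) < h x \<and> (x, p x) \<in> E)
     \<and> normalP A p
     \<and> (\<forall>K. K \<subseteq> A \<and> (\<forall>a\<in>K. \<forall>b\<in>K. canc p a b) \<longrightarrow> finite K)
     \<and> (\<forall>x\<in>XT. ht x \<le> n \<longrightarrow> x \<in> A)"

definition comp where "comp A s = {x. (s, x) \<in> (E \<inter> (V - A) \<times> (V - A))\<^sup>*}"

definition NB where "NB A s = {b \<in> A. \<exists>d\<in>comp A s. (d, b) \<in> E}"

definition NS where "NS n A = {s \<in> XT. ht s = Suc n \<and> s \<notin> A}"

definition spec where
  "spec A p s mq \<longleftrightarrow> fst mq \<in> A \<and> (\<forall>b\<in>NB A s. anc p r0 b (fst mq)) \<and> is_path E (snd mq)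
     \<and> (hd (snd mq), fst mq) \<in> E \<and> last (snd mq) = s \<and> set (snd mq) \<subseteq> comp A s"

definition ch where "ch A p s = (SOME mq. spec A p s mq)"

end

locale stepctx = cta +
  fixes n :: nat and A :: "'a set" and p :: "'a \<Rightarrow> 'a" and h :: "'a \<Rightarrow> nat"
  assumes inv: "Inv n A p h"
begin

lemma rA: "r0 \<in> A" and AV: "A \<subseteq> V"
  and I2: "\<And>x. x \<in> A \<Longrightarrow> x \<noteq> r0 \<Longrightarrow> p x \<in> A \<and> h (p x) < h x \<and> (x, p x) \<in> E"
  and I3: "normalP A p"
  and I4: "\<And>K. K \<subseteq> A \<Longrightarrow> (\<forall>a\<in>K. \<forall>b\<in>K. canc p a b) \<Longrightarrow> finite K"
  and I5: "\<And>x. x \<in> XT \<Longrightarrow> ht x \<le> n \<Longrightarrow> x \<in> A"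
  using inv unfolding Inv_def by blast+

sublocale pt: ptree A p h r0
  by unfold_locales (use rA I2 in blast)+

lemma comp_out: "s \<in> V - A \<Longrightarrow> x \<in> comp A s \<Longrightarrow> x \<in> V - A"
  unfolding comp_def using rtrancl_Restr_in by fast

lemma comp_self: "s \<in> comp A s" unfolding comp_def by simp

lemma comp_trans: "x \<in> comp A s \<Longrightarrow> (x, y) \<in> (E \<inter> (V - A) \<times> (V - A))\<^sup>* \<Longrightarrow> y \<in> comp A s"
proof -
  assume a: "x \<in> comp A s" "(x, y) \<in> (E \<inter> (V - A) \<times> (V - A))\<^sup>*"
  have "(s, x) \<in> (E \<inter> (V - A) \<times> (V - A))\<^sup>*" using a(1) unfolding comp_def by simp
  then have "(s, y) \<in> (E \<inter> (V - A) \<times> (V - A))\<^sup>*" using a(2) by (rule rtrancl_trans)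
  then show ?thesis unfolding comp_def by simp
qed

lemma comp_edge: "x \<in> comp A s \<Longrightarrow> (x, y) \<in> E \<Longrightarrow> x \<in> V - A \<Longrightarrow> y \<in> V - A \<Longrightarrow> y \<in> comp A s"
proof -
  assume a: "x \<in> comp A s" "(x, y) \<in> E" "x \<in> V - A" "y \<in> V - A"
  then have "(x, y) \<in> E \<inter> (V - A) \<times> (V - A)" by blast
  then show ?thesis using comp_trans[OF a(1)] by (simp add: r_into_rtrancl)
qed

lemma comp_sym: "x \<in> comp A s \<Longrightarrow> s \<in> comp A x"
  unfolding comp_def using sym_rtrancl_Restr[OF symE, of s x] by simp

lemma comp_restrict:
  assumes "(x, y) \<in> (E \<inter> (V - A) \<times> (V - A))\<^sup>*" "x \<in> comp A s"
  shows "(x, y) \<in> (E \<inter> comp A s \<times> comp A s)\<^sup>*"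
  using assms
proof (induction rule: rtrancl_induct)
  case base then show ?case by simp
next
  case (step y z)
  have "y \<in> comp A s" using comp_trans step.hyps(1) step.prems by blast
  moreover have "z \<in> comp A s" using comp_trans[of y s z] calculation step.hyps(2) by blast
  ultimately have "(y, z) \<in> E \<inter> comp A s \<times> comp A s" using step.hyps(2) by blast
  then show ?case using step.IH step.prems by (meson rtrancl_into_rtrancl)
qed

lemma comp_path:
  assumes "x \<in> comp A s" "y \<in> comp A s"
  shows "\<exists>c. is_path E c \<and> hd c = x \<and> last c = y \<and> set c \<subseteq> comp A s"
proof -
  have "(s, x) \<in> (E \<inter> (V - A) \<times> (V - A))\<^sup>*" "(s, y) \<in> (E \<inter> (V - A) \<times> (V - A))\<^sup>*"
    using assms unfolding comp_def by auto
  then have "(x, y) \<in> (E \<inter> (V - A) \<times> (V - A))\<^sup>*"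
    using sym_rtrancl_Restr[OF symE] by (meson rtrancl_trans)
  then have "(x, y) \<in> (E \<inter> comp A s \<times> comp A s)\<^sup>*" using comp_restrict assms(1) by blast
  then show ?thesis using rtrancl_path assms(1) by fast
qed

lemma NS_D: "s \<in> NS n A \<Longrightarrow> s \<in> XT \<and> s \<in> V - A \<and> ht s = Suc n"
  unfolding NS_def using XTV by auto

lemma NB_chain: "s \<in> V - A \<Longrightarrow> b1 \<in> NB A s \<Longrightarrow> b2 \<in> NB A s \<Longrightarrow> canc p b1 b2"
proof -
  assume s: "s \<in> V - A" and b1: "b1 \<in> NB A s" and b2: "b2 \<in> NB A s"
  show ?thesis
  proof (cases "b1 = b2")
    case True then show ?thesis unfolding canc_def by (simp add: anc_refl)
  next
    case False
    obtain d1 where d1: "d1 \<in> comp A s" "(d1, b1) \<in> E" "b1 \<in> A" using b1 unfolding NB_def by blast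
    obtain d2 where d2: "d2 \<in> comp A s" "(d2, b2) \<in> E" "b2 \<in> A" using b2 unfolding NB_def by blast
    obtain c where c: "is_path E c" "hd c = d1" "last c = d2" "set c \<subseteq> comp A s"
      using comp_path[OF d1(1) d2(1)] by blast
    have cout: "set c \<subseteq> V - A" using c(4) comp_out[OF s] by blast
    have b2c: "b2 \<notin> set c" using cout d2(3) by blast
    have b1c: "b1 \<notin> set (c @ [b2])" using cout d1(3) False by auto
    have P1: "is_path E (c @ [b2])" using is_path_snoc[OF c(1) b2c] c(3) d2(2) by simp
    have cne: "c \<noteq> []" using c(1) is_path_ne by blast
    have "(b1, hd (c @ [b2])) \<in> E" using d1(2) c(2) cne symE by (auto dest: symD)
    then have P: "is_path E (b1 # c @ [b2])" using is_path_cons[OF P1 b1c] by simp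
    have int: "\<forall>i. 0 < i \<and> i < length (b1 # c @ [b2]) - 1 \<longrightarrow> (b1 # c @ [b2]) ! i \<notin> A"
    proof (intro allI impI)
      fix i assume i: "0 < i \<and> i < length (b1 # c @ [b2]) - 1"
      then have "(b1 # c @ [b2]) ! i = c ! (i - 1)" "i - 1 < length c"
        by (auto simp: nth_Cons nth_append split: nat.splits)
      then show "(b1 # c @ [b2]) ! i \<notin> A" using cout by (metis DiffD2 nth_mem subsetD)
    qed
    have "2 \<le> length (b1 # c @ [b2])" by simp
    then show ?thesis using I3 P int d1(3) d2(3) unfolding normalP_def by fastforce
  qed
qed

lemma spec_exists:
  assumes s: "s \<in> NS n A"
  shows "\<exists>mq. spec A p s mq"
proof -
  have sXT: "s \<in> XT" and sO: "s \<in> V - A" using NS_D[OF s] by auto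
  obtain d c where dc: "(s, d) \<in> (E \<inter> (V - A) \<times> (V - A))\<^sup>*" "(d, c) \<in> E" "c \<in> A"
    using first_exit[OF conn_root[OF sXT] sO rA] by blast
  have "c \<in> NB A s" using dc unfolding NB_def comp_def by blast
  then have NBne: "NB A s \<noteq> {}" by blast
  have NBA: "NB A s \<subseteq> A" unfolding NB_def by blast
  have chain: "\<forall>a\<in>NB A s. \<forall>b\<in>NB A s. canc p a b" using NB_chain[OF sO] by blast
  have fin: "finite (NB A s)" using I4[OF NBA chain] .
  have "finite (h ` NB A s)" "h ` NB A s \<noteq> {}" using NBne fin by auto
  then have "Max (h ` NB A s) \<in> h ` NB A s" by (rule Max_in)
  then obtain m where m: "m \<in> NB A s" "h m = Max (h ` NB A s)" by auto
  have mmax: "\<forall>b\<in>NB A s. anc p r0 b m"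
  proof
    fix b assume b: "b \<in> NB A s"
    have "h b \<le> h m" using m(2) fin b by simp
    moreover have "canc p b m" using chain b m(1) by blast
    ultimately show "anc p r0 b m" unfolding canc_def
      using pt.anc_h NBA m(1) b by (metis leD subsetD)
  qed
  obtain d' where d': "d' \<in> comp A s" "(d', m) \<in> E" using m(1) unfolding NB_def by blast
  obtain q where q: "is_path E q" "hd q = d'" "last q = s" "set q \<subseteq> comp A s"
    using comp_path[OF d'(1) comp_self] by blast
  have "spec A p s (m, q)" unfolding spec_def using m(1) NBA mmax q d' by auto
  then show ?thesis by blast
qed

definition M where "M s = fst (ch A p s)"
definition Q where "Q s = snd (ch A p s)"

lemma MQ:
  assumes "s \<in> NS n A"
  shows "M s \<in> A" "\<And>b. b \<in> NB A s \<Longrightarrow> anc p r0 b (M s)" "is_path E (Q s)" "(hd (Q s), M s) \<in> E"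
    "last (Q s) = s" "set (Q s) \<subseteq> comp A s"
proof -
  have "spec A p s (ch A p s)" unfolding ch_def using someI_ex[OF spec_exists[OF assms]] .
  then show "M s \<in> A" "\<And>b. b \<in> NB A s \<Longrightarrow> anc p r0 b (M s)" "is_path E (Q s)" "(hd (Q s), M s) \<in> E"
    "last (Q s) = s" "set (Q s) \<subseteq> comp A s"
    unfolding spec_def M_def Q_def by auto
qed

lemma Q_out: "s \<in> NS n A \<Longrightarrow> set (Q s) \<subseteq> V - A"
  using MQ(6) comp_out NS_D by blast

lemma comp_disj:
  assumes s1: "s1 \<in> NS n A" and s2: "s2 \<in> NS n A" and x: "x \<in> comp A s1" "x \<in> comp A s2"
  shows "s1 = s2"
proof (rule ccontr)
  assume ne: "s1 \<noteq> s2"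
  have "s1 \<in> comp A x" using comp_sym x(1) .
  then have "(x, s1) \<in> (E \<inter> (V - A) \<times> (V - A))\<^sup>*" unfolding comp_def by simp
  then have "s1 \<in> comp A s2" using comp_trans x(2) by blast
  then obtain c where c: "is_path E c" "hd c = s1" "last c = s2" "set c \<subseteq> comp A s2"
    using comp_path comp_self by blast
  have cO: "set c \<subseteq> V - A" using c(4) comp_out NS_D[OF s2] by blast
  have C: "set c \<in> graph_C V E" using path_graph_C[OF symE c(1)] cO by blast
  have s1c: "s1 \<in> set c" and s2c: "s2 \<in> set c" using c is_path_ne by (metis hd_in_set last_in_set)+
  have XT1: "s1 \<in> XT" "ht s1 = Suc n" and XT2: "s2 \<in> XT" "ht s2 = Suc n" using NS_D s1 s2 by auto
  have nc: "\<not> comparable_T ET0 r0 s1 s2"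
    unfolding comparable_T_def using tle_ht_eq XT1 XT2 ne by metis
  obtain w where w: "w \<in> set c" "tree_le ET0 r0 w s1" "tree_le ET0 r0 w s2"
    using W1[OF C] s1c s2c XT1 XT2 nc by blast
  have "w \<noteq> s1" using w(3) nc unfolding comparable_T_def by blast
  then have "ht w < Suc n" using tle_ht[OF w(2)] tle_ht_eq[OF w(2)] XT1 by fastforce
  then have "w \<in> A" using I5 tle_VT[OF w(2)] by simp
  then show False using w(1) cO by blast
qed

end

context stepctx begin

definition NEW where "NEW = (\<Union>s\<in>NS n A. set (Q s))"
definition A' where "A' = A \<union> NEW"
definition sx where "sx x = (SOME s. s \<in> NS n A \<and> x \<in> set (Q s))"
definition ix where "ix x = (THE i. i < length (Q (sx x)) \<and> Q (sx x) ! i = x)"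
definition p' where "p' x = (if x \<in> A then p x else if ix x = 0 then M (sx x) else Q (sx x) ! (ix x - 1))"
definition h' where "h' x = (if x \<in> A then h x else h (M (sx x)) + Suc (ix x))"

lemma Q_unique: "s1 \<in> NS n A \<Longrightarrow> s2 \<in> NS n A \<Longrightarrow> x \<in> set (Q s1) \<Longrightarrow> x \<in> set (Q s2) \<Longrightarrow> s1 = s2"
  using comp_disj MQ(6) by blast

lemma Qdist: "s \<in> NS n A \<Longrightarrow> distinct (Q s)"
  using MQ(3) unfolding is_path_def by blast

lemma sx_ix: assumes s: "s \<in> NS n A" and i: "i < length (Q s)"
  shows "sx (Q s ! i) = s" "ix (Q s ! i) = i"
proof -
  have ex: "\<exists>s'. s' \<in> NS n A \<and> Q s ! i \<in> set (Q s')" using s i by auto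
  have "sx (Q s ! i) \<in> NS n A \<and> Q s ! i \<in> set (Q (sx (Q s ! i)))"
    unfolding sx_def using someI_ex[OF ex] .
  then show sxe: "sx (Q s ! i) = s" using Q_unique s i by (meson nth_mem)
  show "ix (Q s ! i) = i" unfolding ix_def sxe
  proof (rule the_equality)
    show "i < length (Q s) \<and> Q s ! i = Q s ! i" using i by simp
  next
    fix j assume "j < length (Q s) \<and> Q s ! j = Q s ! i"
    then show "j = i" using Qdist[OF s] i nth_eq_iff_index_eq by blast
  qed
qed

lemma newD: "x \<in> NEW \<Longrightarrow> \<exists>s i. s \<in> NS n A \<and> i < length (Q s) \<and> x = Q s ! i"
  unfolding NEW_def by (auto simp: in_set_conv_nth)

lemma Q_notA: "s \<in> NS n A \<Longrightarrow> i < length (Q s) \<Longrightarrow> Q s ! i \<notin> A"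
  using Q_out by (metis DiffD2 nth_mem subsetD)

lemma p'_new: assumes "s \<in> NS n A" "i < length (Q s)"
  shows "p' (Q s ! i) = (if i = 0 then M s else Q s ! (i - 1))" "h' (Q s ! i) = h (M s) + Suc i"
  unfolding p'_def h'_def using sx_ix[OF assms] Q_notA[OF assms] by auto

lemma p'_old: "x \<in> A \<Longrightarrow> p' x = p x \<and> h' x = h x"
  unfolding p'_def h'_def by simp

lemma anc_old1: "anc p' r0 x y \<Longrightarrow> y \<in> A \<Longrightarrow> anc p r0 x y"
proof (induction rule: anc.induct)
  case (anc_refl y) show ?case by (rule anc.anc_refl)
next
  case (anc_step x y)
  then have "p' y = p y" "p y \<in> A" using p'_old I2 by auto
  then show ?case using anc_step anc.anc_step by metis
qed

lemma anc_old2: "anc p r0 x y \<Longrightarrow> y \<in> A \<Longrightarrow> anc p' r0 x y"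
proof (induction rule: anc.induct)
  case (anc_refl y) show ?case by (rule anc.anc_refl)
next
  case (anc_step x y)
  then have "p' y = p y" "p y \<in> A" using p'_old I2 by auto
  then show ?case using anc_step anc.anc_step by metis
qed

lemma anc_old: "y \<in> A \<Longrightarrow> anc p' r0 x y \<longleftrightarrow> anc p r0 x y"
  using anc_old1 anc_old2 by blast

lemma anc_new: assumes s: "s \<in> NS n A"
  shows "i < length (Q s) \<Longrightarrow> anc p' r0 x (Q s ! i) \<longleftrightarrow> (\<exists>j\<le>i. x = Q s ! j) \<or> anc p r0 x (M s)"
proof (induction i)
  case 0
  have ne: "Q s ! 0 \<noteq> r0" using Q_notA[OF s 0] rA by auto
  have "anc p' r0 x (Q s ! 0) \<longleftrightarrow> x = Q s ! 0 \<or> anc p' r0 x (p' (Q s ! 0))"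
    using anc_cases'[of p' r0 x "Q s ! 0"] ne by simp
  also have "\<dots> \<longleftrightarrow> x = Q s ! 0 \<or> anc p r0 x (M s)"
    using p'_new[OF s 0] anc_old MQ(1)[OF s] by simp
  finally show ?case by simp
next
  case (Suc i)
  have ne: "Q s ! Suc i \<noteq> r0" using Q_notA[OF s Suc.prems] rA by auto
  have "anc p' r0 x (Q s ! Suc i) \<longleftrightarrow> x = Q s ! Suc i \<or> anc p' r0 x (p' (Q s ! Suc i))"
    using anc_cases'[of p' r0 x "Q s ! Suc i"] ne by simp
  also have "\<dots> \<longleftrightarrow> x = Q s ! Suc i \<or> anc p' r0 x (Q s ! i)"
    using p'_new[OF s Suc.prems] by simp
  also have "\<dots> \<longleftrightarrow> x = Q s ! Suc i \<or> (\<exists>j\<le>i. x = Q s ! j) \<or> anc p r0 x (M s)"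
    using Suc.IH Suc.prems by simp
  also have "\<dots> \<longleftrightarrow> (\<exists>j\<le>Suc i. x = Q s ! j) \<or> anc p r0 x (M s)"
    by (auto simp: le_Suc_eq)
  finally show ?case .
qed

lemma walk_comp:
  assumes s: "s \<in> NS n A" and P: "is_path E P" and P0: "P ! 0 \<in> comp A s" and k: "k \<le> length P"
    and out: "\<forall>i<k. P ! i \<notin> A"
  shows "i < k \<Longrightarrow> P ! i \<in> comp A s"
proof (induction i)
  case 0 then show ?case using P0 by simp
next
  case (Suc i)
  then have c: "P ! i \<in> comp A s" by simp
  have e: "(P ! i, P ! Suc i) \<in> E" using P Suc.prems k unfolding is_path_def by simp
  have "P ! Suc i \<in> V" using e EV by blast
  then have "P ! Suc i \<in> V - A" using out Suc.prems by blast
  moreover have "P ! i \<in> V - A" using comp_out[OF _ c] NS_D[OF s] by blast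
  ultimately show ?case using comp_edge[OF c e] by blast
qed

lemma new_old:
  assumes s: "s \<in> NS n A" and i: "i < length (Q s)" and P: "is_path E P" and L: "2 \<le> length P"
    and hdP: "hd P = Q s ! i" and lastP: "last P \<in> A"
    and int: "\<forall>j. 0 < j \<and> j < length P - 1 \<longrightarrow> P ! j \<notin> A'"
  shows "anc p' r0 (last P) (hd P)"
proof -
  have Pne: "P \<noteq> []" using P is_path_ne by blast
  have P0: "P ! 0 = Q s ! i" using hdP Pne by (simp add: hd_conv_nth)
  have out: "\<forall>j<length P - 1. P ! j \<notin> A"
  proof (intro allI impI)
    fix j assume j: "j < length P - 1"
    show "P ! j \<notin> A"
    proof (cases "j = 0")
      case True then show ?thesis using P0 Q_notA[OF s i] by simp
    next
      case False then show ?thesis using int j unfolding A'_def by auto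
    qed
  qed
  have "P ! 0 \<in> comp A s" using P0 MQ(6)[OF s] i by (metis nth_mem subsetD)
  then have c: "P ! (length P - 2) \<in> comp A s"
    using walk_comp[OF s P _ _ out, of "length P - 2"] L by simp
  have "(P ! (length P - 2), P ! Suc (length P - 2)) \<in> E" using P L unfolding is_path_def by simp
  moreover have "Suc (length P - 2) = length P - 1" using L by simp
  ultimately have "(P ! (length P - 2), last P) \<in> E" using Pne by (simp add: last_conv_nth)
  then have "last P \<in> NB A s" unfolding NB_def using lastP c by blast
  then have "anc p r0 (last P) (M s)" using MQ(2)[OF s] by blast
  then show ?thesis using anc_new[OF s i] hdP by simp
qed

lemma new_new:
  assumes s1: "s1 \<in> NS n A" and i: "i < length (Q s1)" and s2: "s2 \<in> NS n A" and j: "j < length (Q s2)"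
    and P: "is_path E P" and hdP: "hd P = Q s1 ! i" and lastP: "last P = Q s2 ! j"
    and int: "\<forall>k. 0 < k \<and> k < length P - 1 \<longrightarrow> P ! k \<notin> A'"
  shows "canc p' (hd P) (last P)"
proof -
  have Pne: "P \<noteq> []" using P is_path_ne by blast
  have P0: "P ! 0 = Q s1 ! i" using hdP Pne by (simp add: hd_conv_nth)
  have PL: "P ! (length P - 1) = Q s2 ! j" using lastP Pne by (simp add: last_conv_nth)
  have out: "\<forall>k<length P. P ! k \<notin> A"
  proof (intro allI impI)
    fix k assume k: "k < length P"
    show "P ! k \<notin> A"
    proof (cases "k = 0")
      case True then show ?thesis using P0 Q_notA[OF s1 i] by simp
    next
      case False
      show ?thesis
      proof (cases "k = length P - 1")
        case True then show ?thesis using PL Q_notA[OF s2 j] by simp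
      next
        case False then show ?thesis using int k \<open>k \<noteq> 0\<close> unfolding A'_def by auto
      qed
    qed
  qed
  have "P ! 0 \<in> comp A s1" using P0 MQ(6)[OF s1] i by (metis nth_mem subsetD)
  then have "P ! (length P - 1) \<in> comp A s1"
    using walk_comp[OF s1 P _ _ out, of "length P - 1"] Pne by simp
  moreover have "Q s2 ! j \<in> comp A s2" using MQ(6)[OF s2] j by (metis nth_mem subsetD)
  ultimately have ss: "s1 = s2" using comp_disj[OF s1 s2] PL by simp
  show ?thesis
  proof (cases "i \<le> j")
    case True
    then have "anc p' r0 (Q s1 ! i) (Q s2 ! j)" using anc_new[OF s2 j] ss by blast
    then show ?thesis unfolding canc_def using hdP lastP by simp
  next
    case False
    then have "anc p' r0 (Q s2 ! j) (Q s1 ! i)" using anc_new[OF s1 i] ss by (metis nat_le_linear)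
    then show ?thesis unfolding canc_def using hdP lastP by simp
  qed
qed

lemma rev_int:
  assumes "\<forall>j. 0 < j \<and> j < length P - 1 \<longrightarrow> P ! j \<notin> B"
  shows "\<forall>j. 0 < j \<and> j < length (rev P) - 1 \<longrightarrow> rev P ! j \<notin> B"
proof (intro allI impI)
  fix j assume j: "0 < j \<and> j < length (rev P) - 1"
  then have "j < length P" by (simp only: length_rev) linarith
  then have "rev P ! j = P ! (length P - Suc j)" by (rule rev_nth)
  moreover have "0 < length P - Suc j \<and> length P - Suc j < length P - 1" using j by auto
  ultimately show "rev P ! j \<notin> B" using assms by simp
qed

lemma normal': "normalP A' p'"
  unfolding normalP_def
proof (intro allI impI, elim conjE)
  fix P assume P: "is_path E P" and L: "2 \<le> length P" and hP: "hd P \<in> A'" and lP: "last P \<in> A'"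
    and int: "\<forall>i. 0 < i \<and> i < length P - 1 \<longrightarrow> P ! i \<notin> A'"
  have Pne: "P \<noteq> []" using P is_path_ne by blast
  show "canc p' (hd P) (last P)"
  proof (cases "hd P \<in> A")
    case hA: True
    show ?thesis
    proof (cases "last P \<in> A")
      case lA: True
      have "\<forall>i. 0 < i \<and> i < length P - 1 \<longrightarrow> P ! i \<notin> A" using int unfolding A'_def by blast
      then have "canc p (hd P) (last P)" using I3 P L hA lA unfolding normalP_def by blast
      then show ?thesis unfolding canc_def using anc_old hA lA by blast
    next
      case lA: False
      then have "last P \<in> NEW" using lP unfolding A'_def by blast
      then obtain s i where si: "s \<in> NS n A" "i < length (Q s)" "last P = Q s ! i" using newD by blast
      have R: "is_path E (rev P)" using is_path_rev[OF symE P] .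
      have "anc p' r0 (last (rev P)) (hd (rev P))"
        using new_old[OF si(1,2) R _ _ _ rev_int[OF int]] L si(3) hA Pne by (simp add: hd_rev last_rev)
      then show ?thesis unfolding canc_def using Pne by (simp add: hd_rev last_rev)
    qed
  next
    case hA: False
    then have "hd P \<in> NEW" using hP unfolding A'_def by blast
    then obtain s i where si: "s \<in> NS n A" "i < length (Q s)" "hd P = Q s ! i" using newD by blast
    show ?thesis
    proof (cases "last P \<in> A")
      case lA: True
      have "anc p' r0 (last P) (hd P)" using new_old[OF si(1,2) P L si(3) lA int] .
      then show ?thesis unfolding canc_def by simp
    next
      case lA: False
      then have "last P \<in> NEW" using lP unfolding A'_def by blast
      then obtain s2 j where sj: "s2 \<in> NS n A" "j < length (Q s2)" "last P = Q s2 ! j" using newD by blast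
      show ?thesis using new_new[OF si(1,2) sj(1,2) P si(3) sj(3) int] .
    qed
  qed
qed

lemma chains': "K \<subseteq> A' \<Longrightarrow> \<forall>a\<in>K. \<forall>b\<in>K. canc p' a b \<Longrightarrow> finite K"
proof -
  assume KA: "K \<subseteq> A'" and ch: "\<forall>a\<in>K. \<forall>b\<in>K. canc p' a b"
  have "\<forall>a\<in>K \<inter> A. \<forall>b\<in>K \<inter> A. canc p a b" using ch anc_old unfolding canc_def by blast
  then have f1: "finite (K \<inter> A)" using I4[of "K \<inter> A"] by blast
  have f2: "finite (K - A)"
  proof (cases "K - A = {}")
    case True then show ?thesis by (metis finite.emptyI)
  next
    case False
    then obtain x0 where x0: "x0 \<in> K" "x0 \<notin> A" by blast
    then have "x0 \<in> NEW" using KA unfolding A'_def by blast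
    then obtain s0 i0 where s0: "s0 \<in> NS n A" "i0 < length (Q s0)" "x0 = Q s0 ! i0" using newD by blast
    have "K - A \<subseteq> set (Q s0)"
    proof
      fix x assume x: "x \<in> K - A"
      then have "x \<in> NEW" using KA unfolding A'_def by blast
      then obtain s i where si: "s \<in> NS n A" "i < length (Q s)" "x = Q s ! i" using newD by blast
      have "canc p' x x0" using ch x x0 by blast
      then show "x \<in> set (Q s0)" unfolding canc_def
      proof
        assume "anc p' r0 x x0"
        then have "(\<exists>j\<le>i0. x = Q s0 ! j) \<or> anc p r0 x (M s0)" using anc_new[OF s0(1,2)] s0(3) by simp
        then show ?thesis
        proof
          assume "\<exists>j\<le>i0. x = Q s0 ! j" then show ?thesis using s0(2) by auto
        next
          assume "anc p r0 x (M s0)"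
          then have "x \<in> A" using pt.anc_A MQ(1)[OF s0(1)] by blast
          then show ?thesis using x by blast
        qed
      next
        assume "anc p' r0 x0 x"
        then have "(\<exists>j\<le>i. x0 = Q s ! j) \<or> anc p r0 x0 (M s)" using anc_new[OF si(1,2)] si(3) by simp
        then show ?thesis
        proof
          assume "\<exists>j\<le>i. x0 = Q s ! j"
          then have "x0 \<in> set (Q s)" using si(2) by auto
          then have "s = s0" using Q_unique[OF si(1) s0(1)] s0 by (metis nth_mem)
          then show ?thesis using si by simp
        next
          assume "anc p r0 x0 (M s)"
          then have "x0 \<in> A" using pt.anc_A MQ(1)[OF si(1)] by blast
          then show ?thesis using x0 by blast
        qed
      qed
    qed
    then show ?thesis using finite_subset by blast
  qed
  have "K = (K \<inter> A) \<union> (K - A)" by blast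
  then show "finite K" using f1 f2 by (metis finite_UnI)
qed

lemma inv': "Inv (Suc n) A' p' h'"
  unfolding Inv_def
proof (intro conjI ballI impI allI)
  show "r0 \<in> A'" using rA unfolding A'_def by blast
  show "A' \<subseteq> V" unfolding A'_def NEW_def using AV Q_out by blast
next
  fix x assume x: "x \<in> A'" "x \<noteq> r0"
  have "p' x \<in> A' \<and> h' (p' x) < h' x \<and> (x, p' x) \<in> E"
  proof (cases "x \<in> A")
    case True
    then show ?thesis using I2[OF True x(2)] p'_old unfolding A'_def by auto
  next
    case False
    then have "x \<in> NEW" using x unfolding A'_def by blast
    then obtain s i where si: "s \<in> NS n A" "i < length (Q s)" "x = Q s ! i" using newD by blast
    show ?thesis
    proof (cases i)
      case 0
      have "p' x = M s" using p'_new[OF si(1,2)] si(3) 0 by simp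
      moreover have "h' (M s) = h (M s)" using p'_old MQ(1)[OF si(1)] by simp
      moreover have "(x, M s) \<in> E" using MQ(4)[OF si(1)] si(3) 0 MQ(3)[OF si(1)] is_path_ne
        by (metis hd_conv_nth)
      ultimately show ?thesis using MQ(1)[OF si(1)] p'_new[OF si(1,2)] si(3) unfolding A'_def by auto
    next
      case (Suc k)
      have k: "k < length (Q s)" using si(2) Suc by simp
      have "p' x = Q s ! k" using p'_new[OF si(1,2)] si(3) Suc by simp
      moreover have "h' (Q s ! k) = h (M s) + Suc k" using p'_new[OF si(1) k] by simp
      moreover have "(Q s ! k, Q s ! Suc k) \<in> E" using MQ(3)[OF si(1)] si(2) Suc unfolding is_path_def by simp
      moreover have "Q s ! k \<in> NEW" unfolding NEW_def using si(1) nth_mem[OF k] by blast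
      ultimately show ?thesis using p'_new[OF si(1,2)] si(3) Suc symE unfolding A'_def
        by (auto dest: symD)
    qed
  qed
  then show "p' x \<in> A'" "h' (p' x) < h' x" "(x, p' x) \<in> E" by auto
next
  show "normalP A' p'" by (rule normal')
next
  fix K assume "K \<subseteq> A' \<and> (\<forall>a\<in>K. \<forall>b\<in>K. canc p' a b)"
  then show "finite K" using chains' by blast
next
  fix x assume x: "x \<in> XT" "ht x \<le> Suc n"
  show "x \<in> A'"
  proof (cases "ht x \<le> n")
    case True then show ?thesis using I5 x unfolding A'_def by blast
  next
    case False
    show ?thesis
    proof (cases "x \<in> A")
      case True then show ?thesis unfolding A'_def by blast
    next
      case xA: False
      then have s: "x \<in> NS n A" unfolding NS_def using x False by simp
      then have "x \<in> set (Q x)" using MQ(5)[OF s] MQ(3)[OF s] is_path_ne by (metis last_in_set)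
      then show ?thesis unfolding A'_def NEW_def using s by blast
    qed
  qed
qed

lemma agree: "A \<subseteq> A'" "\<And>x. x \<in> A \<Longrightarrow> p' x = p x" "\<And>x. x \<in> A \<Longrightarrow> h' x = h x"
  unfolding A'_def using p'_old by auto

end

context cta begin

primrec stage :: "nat \<Rightarrow> 'a set \<times> ('a \<Rightarrow> 'a) \<times> ('a \<Rightarrow> nat)" where
  "stage 0 = ({r0}, id, \<lambda>_. 0)"
| "stage (Suc n) = (case stage n of (A, p, h) \<Rightarrow>
     (stepctx.A' V E XT ET0 r0 n A p, stepctx.p' V E XT ET0 r0 n A p, stepctx.h' V E XT ET0 r0 n A p h))"

definition "SA n = fst (stage n)"
definition "Sp n = fst (snd (stage n))"
definition "Sh n = snd (snd (stage n))"

lemma stage_eq: "stage n = (SA n, Sp n, Sh n)"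
  unfolding SA_def Sp_def Sh_def by simp

lemma stage_Suc: "SA (Suc n) = stepctx.A' V E XT ET0 r0 n (SA n) (Sp n)"
  "Sp (Suc n) = stepctx.p' V E XT ET0 r0 n (SA n) (Sp n)"
  "Sh (Suc n) = stepctx.h' V E XT ET0 r0 n (SA n) (Sp n) (Sh n)"
  unfolding SA_def[of "Suc n"] Sp_def[of "Suc n"] Sh_def[of "Suc n"] by (simp_all add: stage_eq[of n])

lemma inv0: "Inv 0 {r0} id (\<lambda>_. 0)"
proof -
  have 1: "{r0} \<subseteq> V" using rVT XTV by blast
  have 2: "normalP {r0} id" unfolding normalP_def canc_def by (auto intro: anc_refl)
  have 3: "\<forall>K. K \<subseteq> {r0} \<and> (\<forall>a\<in>K. \<forall>b\<in>K. canc id a b) \<longrightarrow> finite K"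
    using finite_subset by blast
  have 4: "\<forall>x\<in>XT. ht x \<le> 0 \<longrightarrow> x \<in> {r0}"
  proof (intro ballI impI)
    fix x assume x: "x \<in> XT" "ht x \<le> 0"
    have "tree_le ET0 r0 r0 x" using tle_root x(1) .
    moreover have "ht r0 = ht x" using ht_root x(2) by simp
    ultimately show "x \<in> {r0}" using tle_ht_eq by blast
  qed
  show ?thesis unfolding Inv_def using 1 2 3 4 by simp
qed

lemma inv_stage: "Inv n (SA n) (Sp n) (Sh n)"
proof (induction n)
  case 0 then show ?case unfolding SA_def Sp_def Sh_def stage.simps fst_conv snd_conv by (rule inv0)
next
  case (Suc n)
  interpret stepctx V E XT ET0 r0 n "SA n" "Sp n" "Sh n"
    by unfold_locales (rule Suc.IH)
  show ?case using inv' unfolding stage_Suc .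
qed

lemma stage_agree: "SA n \<subseteq> SA (Suc n)" "\<And>x. x \<in> SA n \<Longrightarrow> Sp (Suc n) x = Sp n x \<and> Sh (Suc n) x = Sh n x"
proof -
  interpret stepctx V E XT ET0 r0 n "SA n" "Sp n" "Sh n"
    by unfold_locales (rule inv_stage)
  show "SA n \<subseteq> SA (Suc n)" using agree(1) unfolding stage_Suc .
  fix x assume "x \<in> SA n"
  then show "Sp (Suc n) x = Sp n x \<and> Sh (Suc n) x = Sh n x" using agree(2,3) unfolding stage_Suc by simp
qed

lemma stage_mono: "n \<le> m \<Longrightarrow> SA n \<subseteq> SA m \<and> (\<forall>x\<in>SA n. Sp m x = Sp n x \<and> Sh m x = Sh n x)"
proof (induction m rule: dec_induct)
  case base then show ?case by simp
next
  case (step m)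
  then show ?case using stage_agree[where n = m] by fastforce
qed

definition "Af = (\<Union>n. SA n)"
definition "idx x = (LEAST n. x \<in> SA n)"
definition "Pf x = Sp (idx x) x"
definition "Hf x = Sh (idx x) x"

lemma PfHf: "x \<in> SA n \<Longrightarrow> Pf x = Sp n x \<and> Hf x = Sh n x"
proof -
  assume x: "x \<in> SA n"
  have "idx x \<le> n" unfolding idx_def using x by (rule Least_le)
  moreover have "x \<in> SA (idx x)" unfolding idx_def using x by (rule LeastI)
  ultimately show ?thesis unfolding Pf_def Hf_def using stage_mono by metis
qed

lemma I2s: "x \<in> SA n \<Longrightarrow> x \<noteq> r0 \<Longrightarrow> Sp n x \<in> SA n \<and> Sh n (Sp n x) < Sh n x \<and> (x, Sp n x) \<in> E"
  using inv_stage[of n] unfolding Inv_def by blast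

lemma rS: "r0 \<in> SA n" using inv_stage[of n] unfolding Inv_def by (elim conjE)
lemma SV: "SA n \<subseteq> V" using inv_stage[of n] unfolding Inv_def by (elim conjE)
lemma normS: "normalP (SA n) (Sp n)" using inv_stage[of n] unfolding Inv_def by (elim conjE)
lemma I5S: "x \<in> XT \<Longrightarrow> ht x \<le> n \<Longrightarrow> x \<in> SA n"
  using inv_stage[of n] unfolding Inv_def by (elim conjE) blast

lemma rAf: "r0 \<in> Af" unfolding Af_def using rS by blast

lemma ptf: "ptree Af Pf Hf r0"
proof
  show "r0 \<in> Af" by (rule rAf)
next
  fix x assume x: "x \<in> Af" "x \<noteq> r0"
  then obtain n where n: "x \<in> SA n" unfolding Af_def by blast
  have "Sp n x \<in> SA n" "Sh n (Sp n x) < Sh n x" using I2s[OF n x(2)] by auto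
  then show "Pf x \<in> Af" "Hf (Pf x) < Hf x" using PfHf n unfolding Af_def by auto
qed

lemma edges_f: "x \<in> Af \<Longrightarrow> x \<noteq> r0 \<Longrightarrow> (x, Pf x) \<in> E"
  unfolding Af_def using I2s PfHf by fastforce

lemma anc_transfer: "anc (Sp n) r0 a b \<Longrightarrow> b \<in> SA n \<Longrightarrow> anc Pf r0 a b"
proof (induction rule: anc.induct)
  case (anc_refl y) show ?case by (rule anc.anc_refl)
next
  case (anc_step x y)
  then have "Sp n y \<in> SA n" "Pf y = Sp n y" using I2s PfHf by auto
  then show ?case using anc_step anc.anc_step by metis
qed

lemma final: "normal_tree_graph V E Af (pedges Af Pf r0) r0 \<and> XT \<subseteq> Af"
proof -
  interpret ptree Af Pf Hf r0 by (rule ptf)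
  have AfV: "Af \<subseteq> V" unfolding Af_def using SV by blast
  have ETE: "pedges Af Pf r0 \<subseteq> E"
    unfolding pedges_def using edges_f symE by (auto dest: symD)
  have NT: "\<forall>P. is_path E P \<and> length P \<ge> 2 \<and> hd P \<in> Af \<and> last P \<in> Af
            \<and> (\<forall>i. 0 < i \<and> i < length P - 1 \<longrightarrow> P ! i \<notin> Af)
            \<longrightarrow> comparable_T (pedges Af Pf r0) r0 (hd P) (last P)"
  proof (intro allI impI, elim conjE)
    fix P assume P: "is_path E P" "length P \<ge> 2" "hd P \<in> Af" "last P \<in> Af"
      and int: "\<forall>i. 0 < i \<and> i < length P - 1 \<longrightarrow> P ! i \<notin> Af"
    obtain n1 where n1: "hd P \<in> SA n1" using P(3) unfolding Af_def by blast
    obtain n2 where n2: "last P \<in> SA n2" using P(4) unfolding Af_def by blast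
    define n where "n = max n1 n2"
    have h1: "hd P \<in> SA n" using n1 stage_mono[of n1 n] unfolding n_def by auto
    have h2: "last P \<in> SA n" using n2 stage_mono[of n2 n] unfolding n_def by auto
    have "\<forall>i. 0 < i \<and> i < length P - 1 \<longrightarrow> P ! i \<notin> SA n" using int unfolding Af_def by blast
    then have "canc (Sp n) (hd P) (last P)" using normS[of n] P h1 h2 unfolding normalP_def by blast
    then have "anc Pf r0 (hd P) (last P) \<or> anc Pf r0 (last P) (hd P)"
      unfolding canc_def using anc_transfer h1 h2 by blast
    then show "comparable_T (pedges Af Pf r0) r0 (hd P) (last P)"
      unfolding comparable_T_def using tle_anc P(3,4) by blast
  qed
  have XTA: "XT \<subseteq> Af"
  proof
    fix x assume x: "x \<in> XT"
    then have "x \<in> SA (ht x)" using I5S by blast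
    then show "x \<in> Af" unfolding Af_def by blast
  qed
  show ?thesis unfolding normal_tree_graph_def using tree AfV ETE NT XTA by blast
qed

end

lemma c_to_a:
  assumes "E \<subseteq> V \<times> V" "sym E" "weak_normal_tree V (graph_C V E) XT ET0 r0"
  shows "\<exists>VT ET r. normal_tree_graph V E VT ET r \<and> XT \<subseteq> VT"
proof -
  interpret cta V E XT ET0 r0 using assms by unfold_locales
  show ?thesis using final by blast
qed

theorem proposition5p1:
  fixes V :: "'a set" and E :: "('a \<times> 'a) set" and U :: "'a set"
  assumes "E \<subseteq> V \<times> V" and "sym E" and "U \<subseteq> V"
  shows "((\<exists>VT ET r. normal_tree_graph V E VT ET r \<and> U \<subseteq> VT)
           \<longleftrightarrow> (\<exists>VT ET r. normal_tree_cn V (graph_C V E) VT ET r \<and> U \<subseteq> VT))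
       \<and> ((\<exists>VT ET r. normal_tree_cn V (graph_C V E) VT ET r \<and> U \<subseteq> VT)
           \<longleftrightarrow> (\<exists>VT ET r. weak_normal_tree V (graph_C V E) VT ET r \<and> U \<subseteq> VT))"
proof -
  have ab: "(\<exists>VT ET r. normal_tree_graph V E VT ET r \<and> U \<subseteq> VT)
           \<Longrightarrow> (\<exists>VT ET r. normal_tree_cn V (graph_C V E) VT ET r \<and> U \<subseteq> VT)"
    using a_to_b[OF assms(2)] by blast
  have bc: "(\<exists>VT ET r. normal_tree_cn V (graph_C V E) VT ET r \<and> U \<subseteq> VT)
           \<Longrightarrow> (\<exists>VT ET r. weak_normal_tree V (graph_C V E) VT ET r \<and> U \<subseteq> VT)"
    unfolding normal_tree_cn_def by blast
  have ca: "(\<exists>VT ET r. weak_normal_tree V (graph_C V E) VT ET r \<and> U \<subseteq> VT)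
           \<Longrightarrow> (\<exists>VT ET r. normal_tree_graph V E VT ET r \<and> U \<subseteq> VT)"
  proof -
    assume "\<exists>VT ET r. weak_normal_tree V (graph_C V E) VT ET r \<and> U \<subseteq> VT"
    then obtain XT ET0 r0 where w: "weak_normal_tree V (graph_C V E) XT ET0 r0" "U \<subseteq> XT" by blast
    obtain VT ET r where "normal_tree_graph V E VT ET r" "XT \<subseteq> VT"
      using c_to_a[OF assms(1,2) w(1)] by blast
    then show ?thesis using w(2) by blast
  qed
  show ?thesis using ab bc ca by blast
qed

end
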